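(* For an integer $k\ge 1$ let $\Gamma_k$ be the $k\times k$ grid graph (on $n=k^2$ vertices), and for an integer $n\ge 1$ let $S_n$ be the star on $n$ vertices (one center adjacent to $n-1$ leaves, no other edges). For $\rho>0$ let $\mathrm{HUDG}(\rho)$ be the class of graphs realizable as hyperbolic uniform disk graphs with radius $\rho$. Then: (i) $\Gamma_k\in\mathrm{HUDG}(1/n^3)$ for all $k$, where $n=k^2$; (ii) $S_n\notin\mathrm{HUDG}(1/n^3)$ for all $n\ge 8$; (iii) $\Gamma_k\notin\mathrm{HUDG}(\log n)$ for all $k\ge 5$, where $n=k^2$; (iv) $S_n\in\mathrm{HUDG}(\log n)$ for all $n$. Here $\log$ is the natural logarithm.
   Context: $\mathbb{H}^2$ denotes the hyperbolic plane of Gaussian curvature $-1$. A graph is a hyperbolic uniform disk graph with radius $\rho$ if it is isomorphic to the intersection graph of a finite family of closed hyperbolic disks of radius $\rho$ in $\mathbb{H}^2$, i.e., there are points (centers) assigned injectively to its vertices such that two vertices are adjacent iff their centers have hyperbolic distance at most $2\rho$. *)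

theory Defs
  imports Complex_Main
begin

text \<open>Hyperbolic plane of curvature -1, upper half-plane model:
  points are complex numbers with positive imaginary part.\<close>

definition H2 :: "complex set" where
  "H2 = {z. Im z > 0}"

definition hdist :: "complex \<Rightarrow> complex \<Rightarrow> real" where
  "hdist z w = arcosh (1 + (cmod (z - w))\<^sup>2 / (2 * Im z * Im w))"

definition hudg :: "real \<Rightarrow> 'a set \<Rightarrow> ('a \<Rightarrow> 'a \<Rightarrow> bool) \<Rightarrow> bool" where
  "hudg \<rho> V E \<longleftrightarrow> finite V \<and>
     (\<exists>p. inj_on p V \<and> p ` V \<subseteq> H2 \<and>
        (\<forall>u\<in>V. \<forall>v\<in>V. u \<noteq> v \<longrightarrow> (E u v \<longleftrightarrow> hdist (p u) (p v) \<le> 2 * \<rho>)))"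

definition grid_V :: "nat \<Rightarrow> (nat \<times> nat) set" where
  "grid_V k = {0..<k} \<times> {0..<k}"

definition grid_E :: "(nat \<times> nat) \<Rightarrow> (nat \<times> nat) \<Rightarrow> bool" where
  "grid_E a b \<longleftrightarrow>
     (fst a = fst b \<and> (snd a = snd b + 1 \<or> snd b = snd a + 1)) \<or>
     (snd a = snd b \<and> (fst a = fst b + 1 \<or> fst b = fst a + 1))"

definition star_V :: "nat \<Rightarrow> nat set" where
  "star_V n = {0..<n}"

definition star_E :: "nat \<Rightarrow> nat \<Rightarrow> bool" where
  "star_E a b \<longleftrightarrow> a \<noteq> b \<and> (a = 0 \<or> b = 0)"

end

theory Submission
  imports Defs "HOL-Analysis.Complex_Transcendental"
begin


definition Qf :: "complex \<Rightarrow> complex \<Rightarrow> real" where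
  "Qf z w = (cmod (z - w))\<^sup>2 / (2 * Im z * Im w)"

lemma Qf_nonneg: "Im z > 0 \<Longrightarrow> Im w > 0 \<Longrightarrow> Qf z w \<ge> 0"
  by (simp add: Qf_def)

lemma hdist_Qf: "hdist z w = arcosh (1 + Qf z w)"
  by (simp add: hdist_def Qf_def)

lemma arcosh_le_iff:
  fixes x y :: real
  assumes "x \<ge> 1" "y \<ge> 0"
  shows "arcosh x \<le> y \<longleftrightarrow> x \<le> cosh y"
proof -
  have "arcosh x \<le> y \<longleftrightarrow> cosh (arcosh x) \<le> cosh y"
    using assms by (subst cosh_real_nonneg_le_iff) auto
  also have "\<dots> \<longleftrightarrow> x \<le> cosh y" using assms by simp
  finally show ?thesis .
qed

lemma hdist_le_iff:
  assumes "z \<in> H2" "w \<in> H2" "r \<ge> 0"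
  shows "hdist z w \<le> r \<longleftrightarrow> 1 + Qf z w \<le> cosh r"
  using assms Qf_nonneg[of z w] unfolding H2_def hdist_Qf
  by (subst arcosh_le_iff) auto

lemma cmod_diff_sq: "(cmod (a - b))\<^sup>2 = (cmod a)\<^sup>2 + (cmod b)\<^sup>2 - 2 * Re (a * cnj b)"
  unfolding cmod_power2 by (simp add: power2_eq_square algebra_simps)


lemma part4:
  fixes n :: nat assumes "n \<ge> 1"
  shows "hudg (ln (real n)) (star_V n) star_E"
proof (cases "n = 1")
  case True
  have "star_V n = {0}" using True by (auto simp: star_V_def)
  then show ?thesis unfolding hudg_def
    by (intro conjI exI[of _ "\<lambda>_. \<i>"]) (auto simp: H2_def)
next
  case False
  hence n2: "n \<ge> 2" using assms by auto
  define N where "N = real n"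
  have N2: "N \<ge> 2" using n2 by (simp add: N_def)
  define p where "p = (\<lambda>j::nat. if j = 0 then Complex 0 (N^2/2) else Complex ((real j - N/2) * N) 1)"
  have T: "cosh (2 * ln N) = (N^2 + inverse (N^2)) / 2"
  proof -
    have "2 * ln N = ln (N^2)" using N2 by (simp add: ln_realpow)
    thus ?thesis using N2 by (simp add: cosh_ln_real)
  qed
  have H: "p j \<in> H2" for j using N2 by (auto simp: p_def H2_def)
  have inj: "inj_on p (star_V n)"
  proof (rule inj_onI)
    fix a b assume "a \<in> star_V n" "b \<in> star_V n" "p a = p b"
    have sq: "2 * (real j)^2 \<noteq> 1" if "j > 0" for j :: nat
    proof -
      have "real j \<ge> 1" using that by simp
      hence "(real j)^2 \<ge> 1" by (simp add: one_le_power)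
      thus ?thesis by simp
    qed
    show "a = b" using N2 \<open>p a = p b\<close> sq[of a] sq[of b]
      by (auto simp: p_def complex_eq_iff split: if_splits)
  qed
  have key: "star_E a b \<longleftrightarrow> hdist (p a) (p b) \<le> 2 * ln N"
    if "a \<in> star_V n" "b \<in> star_V n" "a \<noteq> b" for a b
  proof -
    have r: "2 * ln N \<ge> 0" using N2 by simp
    have hd: "hdist (p a) (p b) \<le> 2 * ln N \<longleftrightarrow> Qf (p a) (p b) \<le> (N^2 + inverse (N^2)) / 2 - 1"
      using hdist_le_iff[OF H[of a] H[of b] r] T by linarith
    have an: "real a \<le> N - 1" "real b \<le> N - 1" using that by (auto simp: star_V_def N_def)
    show ?thesis
    proof (cases "a = 0 \<or> b = 0")
      case True
      have E: "star_E a b" using True that by (simp add: star_E_def)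
      have "Qf (p a) (p b) \<le> (N^2 + inverse (N^2)) / 2 - 1"
      proof -
        { fix j :: nat assume j: "j \<noteq> 0" "real j \<le> N - 1"
          define x where "x = (real j - N/2) * N"
          have j1: "real j \<ge> 1" using j by simp
          have xb: "x^2 \<le> ((N - 2) * N / 2)^2"
          proof -
            have "real j - N/2 \<le> (N - 2)/2" "-(real j - N/2) \<le> (N - 2)/2" using j1 j(2) by (simp_all add: field_simps)
            hence "\<bar>real j - N/2\<bar> \<le> (N - 2)/2" by (simp only: abs_le_iff)
            hence "\<bar>x\<bar> \<le> (N - 2) * N / 2" using N2 by (simp add: x_def abs_mult)
            from power_mono[OF this abs_ge_zero, of 2] show ?thesis by simp
          qed
          have "Qf (p 0) (p j) = (x^2 + (N^2/2 - 1)^2) / (N^2)"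
            using j by (simp add: Qf_def p_def x_def cmod_power2 power2_commute[of "(real j - N/2) * N"])
          also have "\<dots> \<le> (N^2 + inverse (N^2)) / 2 - 1"
          proof -
            have "x^2 + (N^2/2 - 1)^2 \<le> ((N - 2) * N / 2)^2 + (N^2/2 - 1)^2" using xb by simp
            also have "\<dots> \<le> ((N^2 + inverse (N^2)) / 2 - 1) * N^2"
            proof -
              have "inverse (N^2) * N^2 = 1" using N2 by simp
              moreover have "N^3 - N^2 \<ge> 1/2"
              proof -
                have "N^3 - N^2 = N^2 * (N - 1)" by (simp add: power2_eq_square power3_eq_cube algebra_simps)
                moreover have "N^2 \<ge> 2^2" using N2 by (intro power_mono) auto
                moreover have "N^2 * (N - 1) \<ge> 2^2 * 1" using \<open>N^2 \<ge> 2^2\<close> N2 by (intro mult_mono) auto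
                ultimately show ?thesis by simp
              qed
              moreover have "((N - 2) * N / 2)^2 + (N^2/2 - 1)^2 = N^4/2 - N^3 + 1"
                by (simp add: power2_eq_square power3_eq_cube eval_nat_numeral field_simps)
              moreover have "((N^2 + inverse (N^2)) / 2 - 1) * N^2 = N^4/2 - N^2 + 1/2"
                using N2 by (simp add: power2_eq_square eval_nat_numeral field_simps)
              ultimately show ?thesis by linarith
            qed
            finally show ?thesis using N2 by (simp add: pos_divide_le_eq)
          qed
          finally have "Qf (p 0) (p j) \<le> (N^2 + inverse (N^2)) / 2 - 1" .
        } note * = this
        show ?thesis
        proof (cases "a = 0")
          case True
          thus ?thesis using *[of b] that an by auto
        next
          case False
          hence "b = 0" using \<open>a = 0 \<or> b = 0\<close> by simp
          moreover have "Qf (p a) (p 0) = Qf (p 0) (p a)"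
            by (simp add: Qf_def norm_minus_commute mult.commute)
          ultimately show ?thesis using *[of a] False an by auto
        qed
      qed
      thus ?thesis using E hd by simp
    next
      case False
      have E: "\<not> star_E a b" using False by (simp add: star_E_def)
      have "Qf (p a) (p b) = ((real a - real b) * N)^2 / 2"
        using False by (simp add: Qf_def p_def cmod_power2 algebra_simps)
      also have "\<dots> \<ge> N^2 / 2"
      proof -
        have "\<bar>real a - real b\<bar> \<ge> 1" using \<open>a \<noteq> b\<close> by (cases "a < b") auto
        hence "(real a - real b)^2 \<ge> 1" by (metis abs_le_square_iff abs_one one_power2) 
        hence "(real a - real b)^2 * N^2 \<ge> 1 * N^2" by (intro mult_right_mono) auto
        thus ?thesis by (simp add: power_mult_distrib)
      qed
      finally have "Qf (p a) (p b) \<ge> N^2/2" .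
      moreover have "inverse (N^2) < 2" using N2
        by (smt (verit) inverse_le_1_iff one_le_power)
      ultimately have "(N^2 + inverse (N^2))/2 - 1 < Qf (p a) (p b)" by (simp add: field_simps)
      thus ?thesis using E hd by auto
    qed
  qed
  show ?thesis unfolding hudg_def
    using inj H key by (intro conjI exI[of _ p]) (auto simp: star_V_def N_def)
qed


lemma cosh_le_1_plus_sq:
  fixes x :: real assumes "0 \<le> x" "x \<le> 1"
  shows "cosh x \<le> 1 + x^2"
proof -
  have e1: "exp x \<le> 1 + x + x^2" using exp_bound[OF assms] .
  have "1 + x \<le> exp x" using exp_ge_add_one_self .
  hence "exp (-x) \<le> inverse (1 + x)" using assms
    by (simp add: exp_minus le_imp_inverse_le)
  also have "inverse (1 + x) \<le> 1 - x + x^2"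
  proof -
    have "(1 + x) * (1 - x + x^2) = 1 + x^3" by (simp add: power2_eq_square power3_eq_cube algebra_simps)
    also have "\<dots> \<ge> 1" using assms by simp
    finally show ?thesis using assms by (simp add: field_simps mult.commute)
  qed
  finally have "exp (-x) \<le> 1 - x + x^2" .
  thus ?thesis using e1 by (simp add: cosh_def)
qed

lemma int_sq_ge:
  fixes i :: int assumes "\<bar>i\<bar> \<ge> c" "c \<ge> 0"
  shows "i^2 \<ge> c^2"
proof -
  have "\<bar>i\<bar>^2 \<ge> c^2" using assms by (intro power_mono) auto
  thus ?thesis by simp
qed

lemma grid_E_sq:
  fixes a b :: "nat \<times> nat"
  defines "d1 \<equiv> real (fst a) - real (fst b)" and "d2 \<equiv> real (snd a) - real (snd b)"
  assumes "a \<noteq> b"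
  shows "(grid_E a b \<longrightarrow> d1^2 + d2^2 = 1) \<and> (\<not> grid_E a b \<longrightarrow> d1^2 + d2^2 \<ge> 2)"
proof -
  define i1 where "i1 = int (fst a) - int (fst b)"
  define i2 where "i2 = int (snd a) - int (snd b)"
  have d: "d1 = of_int i1" "d2 = of_int i2" by (simp_all add: d1_def d2_def i1_def i2_def)
  have ne: "i1 \<noteq> 0 \<or> i2 \<noteq> 0" using assms(3) by (auto simp: i1_def i2_def prod_eq_iff)
  have G: "grid_E a b \<longleftrightarrow> (i1 = 0 \<and> \<bar>i2\<bar> = 1) \<or> (i2 = 0 \<and> \<bar>i1\<bar> = 1)"
    by (auto simp: grid_E_def i1_def i2_def)
  have A: "(grid_E a b \<longrightarrow> i1^2 + i2^2 = 1) \<and> (\<not> grid_E a b \<longrightarrow> i1^2 + i2^2 \<ge> 2)"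
  proof (intro conjI impI)
    assume "grid_E a b"
    then show "i1^2 + i2^2 = 1" unfolding G by (auto simp: power2_eq_square abs_if split: if_splits)
  next
    assume "\<not> grid_E a b"
    hence ng: "\<not> ((i1 = 0 \<and> \<bar>i2\<bar> = 1) \<or> (i2 = 0 \<and> \<bar>i1\<bar> = 1))" using G by simp
    show "i1^2 + i2^2 \<ge> 2"
    proof (cases "i1 = 0")
      case True
      hence "\<bar>i2\<bar> \<ge> 2" using ng ne by auto
      from int_sq_ge[OF this] show ?thesis using True by simp
    next
      case False
      show ?thesis
      proof (cases "i2 = 0")
        case True
        hence "\<bar>i1\<bar> \<ge> 2" using ng False by auto
        from int_sq_ge[OF this] show ?thesis using True by simp
      next
        case False2: False
        have "i1^2 \<ge> 1^2" "i2^2 \<ge> 1^2" using int_sq_ge[of 1 i1] int_sq_ge[of 1 i2] False False2 by auto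
        thus ?thesis by simp
      qed
    qed
  qed
  have B: "d1^2 + d2^2 = of_int (i1^2 + i2^2)" by (simp add: d)
  show ?thesis
  proof (intro conjI impI)
    assume "grid_E a b"
    with A B show "d1^2 + d2^2 = 1" by simp
  next
    assume "\<not> grid_E a b"
    with A B have "i1^2 + i2^2 \<ge> 2" by simp
    hence "(of_int (i1^2 + i2^2) :: real) \<ge> of_int 2" by (simp only: of_int_le_iff)
    with A B show "d1^2 + d2^2 \<ge> 2" by simp
  qed
qed

lemma part1:
  fixes k :: nat assumes "k \<ge> 1"
  shows "hudg (1 / (real (k^2))^3) (grid_V k) grid_E"
proof (cases "k = 1")
  case True
  have "grid_V k = {(0,0)}" using True by (auto simp: grid_V_def)
  then show ?thesis unfolding hudg_def
    by (intro conjI exI[of _ "\<lambda>_. \<i>"]) (auto simp: H2_def)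
next
  case False
  hence k2: "k \<ge> 2" using assms by auto
  define K where "K = real k"
  have K2: "K \<ge> 2" using k2 by (simp add: K_def)
  define r where "r = 1 / (real (k^2))^3"
  have r: "r = 1 / K^6" by (simp add: r_def K_def)
  have K6: "K^6 \<ge> 2^6" using K2 by (intro power_mono) auto
  have K10: "K^10 \<ge> 2^10" using K2 by (intro power_mono) auto
  define x where "x = 2 * r"
  have x0: "0 < x" using K2 by (simp add: x_def r)
  have K6p: "K^6 > 0" using K2 by simp
  have x1: "x \<le> 1" using K6 K6p by (simp add: x_def r divide_le_eq)
  define B where "B = cosh x - 1"
  have B0: "B > 0"
  proof -
    have "cosh 0 < cosh x" using x0 by (subst cosh_real_nonneg_less_iff) auto
    thus ?thesis by (simp add: B_def)
  qed
  have Bx: "B \<le> x^2" using cosh_le_1_plus_sq[of x] x0 x1 by (simp add: B_def)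
  define s where "s = sqrt (2 * B)"
  have s0: "s > 0" using B0 by (simp add: s_def)
  have s2: "s^2 = 2 * B" using B0 by (simp add: s_def)
  have Ks: "K * s \<le> 1/4"
  proof -
    have "(K * s)^2 = 2 * B * K^2" using s2 by (simp add: power_mult_distrib)
    also have "\<dots> \<le> 2 * x^2 * K^2" using Bx by (simp add: mult_right_mono)
    also have "\<dots> = 8 / K^10"
      using K2 by (simp add: x_def r power2_eq_square eval_nat_numeral field_simps)
    also have "\<dots> \<le> 8 / 2^10" by (rule divide_left_mono) (use K10 K2 in auto)
    also have "\<dots> \<le> (1/4)^2" by (simp add: power2_eq_square)
    finally show ?thesis by (rule power2_le_imp_le) simp
  qed
  define p where "p = (\<lambda>v::nat\<times>nat. Complex (s * real (fst v)) (1 + s * real (snd v)))"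
  have H: "p v \<in> H2" for v using s0 by (simp add: p_def H2_def add_pos_nonneg)
  have inj: "inj_on p (grid_V k)"
    by (rule inj_onI) (use s0 in \<open>auto simp: p_def complex_eq_iff prod_eq_iff\<close>)
  have ht: "1 \<le> Im (p v) \<and> Im (p v) \<le> 5/4" if "v \<in> grid_V k" for v
  proof -
    have "real (snd v) \<le> K" using that by (auto simp: grid_V_def K_def)
    hence "s * real (snd v) \<le> s * K" using s0 by (simp add: mult_left_mono)
    also have "s * K \<le> 1/4" using Ks by (simp add: mult.commute)
    finally have "s * real (snd v) \<le> 1/4" .
    moreover have "s * real (snd v) \<ge> 0" using s0 by simp
    ultimately show ?thesis by (simp add: p_def)
  qed
  have key: "grid_E a b \<longleftrightarrow> hdist (p a) (p b) \<le> 2 * r"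
    if ab: "a \<in> grid_V k" "b \<in> grid_V k" "a \<noteq> b" for a b
  proof -
    define d1 where "d1 = real (fst a) - real (fst b)"
    define d2 where "d2 = real (snd a) - real (snd b)"
    have hd: "hdist (p a) (p b) \<le> 2 * r \<longleftrightarrow> Qf (p a) (p b) \<le> B"
      using hdist_le_iff[OF H[of a] H[of b], of "2*r"] K2 by (auto simp: B_def x_def r)
    have Q: "Qf (p a) (p b) = s^2 * (d1^2 + d2^2) / (2 * Im (p a) * Im (p b))"
    proof -
      have "(cmod (p a - p b))^2 = (s * d1)^2 + (s * d2)^2"
        by (simp add: p_def cmod_power2 d1_def d2_def right_diff_distrib)
      also have "\<dots> = s^2 * (d1^2 + d2^2)" by (simp add: power_mult_distrib distrib_left)
      finally show ?thesis by (simp add: Qf_def)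
    qed
    have ya: "1 \<le> Im (p a)" "Im (p a) \<le> 5/4" and yb: "1 \<le> Im (p b)" "Im (p b) \<le> 5/4"
      using ht ab by auto
    have "1 * 1 \<le> Im (p a) * Im (p b)" using ya yb by (intro mult_mono) auto
    hence yy1: "1 \<le> Im (p a) * Im (p b)" by simp
    have yy2: "Im (p a) * Im (p b) \<le> 25/16"
    proof -
      have "Im (p a) * Im (p b) \<le> 5/4 * (5/4)" using ya yb by (intro mult_mono) auto
      thus ?thesis by simp
    qed
    note G = grid_E_sq[OF ab(3), folded d1_def d2_def]
    show ?thesis
    proof (cases "grid_E a b")
      case True
      hence "d1^2 + d2^2 = 1" using G by simp
      hence "Qf (p a) (p b) = B / (Im (p a) * Im (p b))" using Q s2 by simp
      also have "\<dots> \<le> B" using yy1 B0 by (simp add: divide_le_eq mult_le_cancel_left1 less_le_trans[OF zero_less_one])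
      finally show ?thesis using True hd by simp
    next
      case False
      hence g2: "d1^2 + d2^2 \<ge> 2" using G by simp
      have "B < 32 * B / 25" using B0 by simp
      also have "32 * B / 25 = 2 * (2 * B) / (2 * (25/16))" by simp
      also have "\<dots> \<le> (d1^2 + d2^2) * (2 * B) / (2 * (Im (p a) * Im (p b)))"
      proof (rule frac_le)
        show "0 \<le> (d1^2 + d2^2) * (2 * B)" using B0 by simp
        show "2 * (2 * B) \<le> (d1^2 + d2^2) * (2 * B)" using g2 B0 by (intro mult_right_mono) auto
        show "0 < 2 * (Im (p a) * Im (p b))" using yy1 by simp
        show "2 * (Im (p a) * Im (p b)) \<le> 2 * (25/16)" using yy2 by simp
      qed
      also have "\<dots> = Qf (p a) (p b)" using Q s2 by (simp add: mult.commute mult.left_commute)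
      finally show ?thesis using False hd by simp
    qed
  qed
  show ?thesis unfolding hudg_def r_def[symmetric]
    using inj H key by (intro conjI exI[of _ p]) (auto simp: grid_V_def)
qed


definition sq1 :: "complex \<Rightarrow> real" where "sq1 p = sqrt (1 - (cmod p)\<^sup>2)"
definition Dk :: "complex \<Rightarrow> complex \<Rightarrow> real" where
  "Dk p q = (1 - Re (p * cnj q)) / (sq1 p * sq1 q)"

definition phi :: "complex \<Rightarrow> complex \<Rightarrow> complex" where
  "phi c z = (z - c) / (z - cnj c)"
definition kl :: "complex \<Rightarrow> complex" where
  "kl w = of_real (2 / (1 + (cmod w)\<^sup>2)) * w"
definition Km :: "complex \<Rightarrow> complex \<Rightarrow> complex" where
  "Km c z = kl (phi c z)"

lemma sq1_pos: "cmod p < 1 \<Longrightarrow> sq1 p > 0"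
  unfolding sq1_def by (simp add: abs_square_less_1)

lemma sq1_sq: "cmod p < 1 \<Longrightarrow> (sq1 p)\<^sup>2 = 1 - (cmod p)\<^sup>2"
  unfolding sq1_def by (simp add: abs_square_less_1 less_imp_le)

lemma sq1_0 [simp]: "sq1 0 = 1" by (simp add: sq1_def)

lemma Dk_sym: "Dk p q = Dk q p"
proof -
  have "Re (p * cnj q) = Re (q * cnj p)"
    by (simp add: algebra_simps)
  thus ?thesis by (simp add: Dk_def mult.commute)
qed

lemma Dk_0: "Dk 0 q = 1 / sq1 q" by (simp add: Dk_def)

lemma den_nz: "c \<in> H2 \<Longrightarrow> z \<in> H2 \<Longrightarrow> z - cnj c \<noteq> 0"
  by (auto simp: H2_def complex_eq_iff)

lemma phi_norm_gap:
  assumes "c \<in> H2" "z \<in> H2"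
  shows "1 - (cmod (phi c z))\<^sup>2 = 4 * Im z * Im c / (cmod (z - cnj c))\<^sup>2"
proof -
  define X where "X = (cmod (z - cnj c))\<^sup>2"
  have X: "X > 0" using den_nz[OF assms] by (simp add: X_def)
  have h: "(cmod (z - c))\<^sup>2 = X - 4 * Im z * Im c"
    unfolding X_def cmod_power2 by (simp add: power2_eq_square algebra_simps)
  have "(cmod (phi c z))\<^sup>2 = (cmod (z - c))\<^sup>2 / X"
    by (simp add: phi_def norm_divide power_divide X_def)
  hence "1 - (cmod (phi c z))\<^sup>2 = 1 - (X - 4 * Im z * Im c) / X" using h by simp
  also have "\<dots> = 4 * Im z * Im c / X" using X by (simp add: field_simps)
  finally show ?thesis by (simp add: X_def)
qed

lemma phi_norm_lt:
  assumes "c \<in> H2" "z \<in> H2"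
  shows "cmod (phi c z) < 1"
proof -
  have "1 - (cmod (phi c z))\<^sup>2 > 0"
    using phi_norm_gap[OF assms] assms den_nz[OF assms] by (simp add: H2_def)
  hence "(cmod (phi c z))\<^sup>2 < 1\<^sup>2" by simp
  thus ?thesis by (rule power2_less_imp_less) simp
qed

lemma phi_diff:
  assumes "c \<in> H2" "z1 \<in> H2" "z2 \<in> H2"
  shows "phi c z1 - phi c z2 = (z1 - z2) * (c - cnj c) / ((z1 - cnj c) * (z2 - cnj c))"
  using den_nz[OF assms(1,2)] den_nz[OF assms(1,3)]
  by (simp add: phi_def field_simps)

lemma Qf_phi:
  assumes "c \<in> H2" "z1 \<in> H2" "z2 \<in> H2"
  defines "w1 \<equiv> phi c z1" and "w2 \<equiv> phi c z2"
  shows "Qf z1 z2 = 2 * (cmod (w1 - w2))\<^sup>2 / ((1 - (cmod w1)\<^sup>2) * (1 - (cmod w2)\<^sup>2))"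
proof -
  have n1: "cmod (z1 - cnj c) > 0" and n2: "cmod (z2 - cnj c) > 0"
    using den_nz[OF assms(1,2)] den_nz[OF assms(1,3)] by auto
  have ic: "Im c > 0" "Im z1 > 0" "Im z2 > 0" using assms by (auto simp: H2_def)
  have cc: "(cmod (c - cnj c))\<^sup>2 = 4 * (Im c)\<^sup>2"
    unfolding cmod_power2 by (simp add: power2_eq_square)
  have "(cmod (w1 - w2))\<^sup>2 = (cmod (z1 - z2))\<^sup>2 * (4 * (Im c)\<^sup>2) / ((cmod (z1 - cnj c))\<^sup>2 * (cmod (z2 - cnj c))\<^sup>2)"
    unfolding w1_def w2_def phi_diff[OF assms(1,2,3)]
    by (simp add: norm_mult norm_divide power_mult_distrib power_divide cc)
  moreover have "1 - (cmod w1)\<^sup>2 = 4 * Im z1 * Im c / (cmod (z1 - cnj c))\<^sup>2"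
    unfolding w1_def using phi_norm_gap[OF assms(1,2)] .
  moreover have "1 - (cmod w2)\<^sup>2 = 4 * Im z2 * Im c / (cmod (z2 - cnj c))\<^sup>2"
    unfolding w2_def using phi_norm_gap[OF assms(1,3)] .
  ultimately have "2 * (cmod (w1 - w2))\<^sup>2 / ((1 - (cmod w1)\<^sup>2) * (1 - (cmod w2)\<^sup>2)) =
     2 * ((cmod (z1 - z2))\<^sup>2 * (4 * (Im c)\<^sup>2) / ((cmod (z1 - cnj c))\<^sup>2 * (cmod (z2 - cnj c))\<^sup>2))
     / ((4 * Im z1 * Im c / (cmod (z1 - cnj c))\<^sup>2) * (4 * Im z2 * Im c / (cmod (z2 - cnj c))\<^sup>2))"
    by simp
  also have "\<dots> = (cmod (z1 - z2))\<^sup>2 / (2 * Im z1 * Im z2)"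
  proof -
    have gen: "2 * (N * (4 * y^2) / (A * B)) / ((4 * u * y / A) * (4 * v * y / B)) = N / (2 * u * v)"
      if "A > 0" "B > 0" "y > 0" "u > 0" "v > 0" for N A B y u v :: real
      using that by (simp add: field_simps power2_eq_square)
    show ?thesis by (rule gen) (use n1 n2 ic in simp_all)
  qed
  finally show ?thesis by (simp add: Qf_def)
qed

lemma kl_props:
  assumes "cmod w < 1"
  shows "cmod (kl w) < 1" "sq1 (kl w) = (1 - (cmod w)\<^sup>2) / (1 + (cmod w)\<^sup>2)"
proof -
  define r where "r = cmod w"
  have r: "0 \<le> r" "r < 1" using assms by (auto simp: r_def)
  have nk: "cmod (kl w) = 2 * r / (1 + r\<^sup>2)"
  proof -
    have "cmod (kl w) = \<bar>2 / (1 + (cmod w)\<^sup>2)\<bar> * cmod w" by (simp only: kl_def norm_mult norm_of_real)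
    also have "\<dots> = 2 * r / (1 + r\<^sup>2)" by (simp add: r_def)
    finally show ?thesis .
  qed
  have gap: "1 - (cmod (kl w))\<^sup>2 = ((1 - r\<^sup>2) / (1 + r\<^sup>2))\<^sup>2"
  proof -
    have d: "1 + r\<^sup>2 > 0" by (simp add: add_pos_nonneg)
    have "1 - (2 * r / (1 + r\<^sup>2))\<^sup>2 = ((1 + r\<^sup>2)\<^sup>2 - (2 * r)\<^sup>2) / (1 + r\<^sup>2)\<^sup>2"
      using d by (simp add: power_divide field_simps)
    also have "(1 + r\<^sup>2)\<^sup>2 - (2 * r)\<^sup>2 = (1 - r\<^sup>2)\<^sup>2" by (simp add: power2_eq_square algebra_simps)
    finally show ?thesis unfolding nk by (simp add: power_divide)
  qed
  have "r\<^sup>2 < 1" using r by (simp add: abs_square_less_1)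
  hence pos: "(1 - r\<^sup>2) / (1 + r\<^sup>2) > 0" by (intro divide_pos_pos) (simp_all add: add_pos_nonneg)
  have "1 - (cmod (kl w))\<^sup>2 > 0" unfolding gap using pos by (rule zero_less_power)
  hence "(cmod (kl w))\<^sup>2 < 1\<^sup>2" by simp
  thus "cmod (kl w) < 1" by (rule power2_less_imp_less) simp
  show "sq1 (kl w) = (1 - (cmod w)\<^sup>2) / (1 + (cmod w)\<^sup>2)"
    unfolding sq1_def gap real_sqrt_abs using abs_of_pos[OF pos] by (simp add: r_def)
qed

lemma Dk_kl:
  assumes "cmod w1 < 1" "cmod w2 < 1"
  shows "Dk (kl w1) (kl w2) = 1 + 2 * (cmod (w1 - w2))\<^sup>2 / ((1 - (cmod w1)\<^sup>2) * (1 - (cmod w2)\<^sup>2))"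
proof -
  define a where "a = (cmod w1)\<^sup>2"
  define b where "b = (cmod w2)\<^sup>2"
  define e where "e = Re (w1 * cnj w2)"
  have a: "0 \<le> a" "a < 1" and b: "0 \<le> b" "b < 1" using assms
    by (auto simp: a_def b_def abs_square_less_1)
  have re: "Re (kl w1 * cnj (kl w2)) = 4 * e / ((1 + a) * (1 + b))"
    by (simp add: kl_def e_def a_def b_def)
  have d: "(cmod (w1 - w2))\<^sup>2 = a + b - 2 * e"
    by (simp add: cmod_diff_sq a_def b_def e_def)
  have gen: "(1 - 4 * e / ((1 + a) * (1 + b))) / (((1 - a) / (1 + a)) * ((1 - b) / (1 + b)))
      = 1 + 2 * (a + b - 2 * e) / ((1 - a) * (1 - b))"
  proof -
    have p: "1 - a > 0" "1 + a > 0" "1 - b > 0" "1 + b > 0" using a b by auto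
    define P where "P = (1 + a) * (1 + b)"
    define M where "M = (1 - a) * (1 - b)"
    have P: "P > 0" "M > 0" using p by (simp_all add: P_def M_def)
    have m: "((1 - a) / (1 + a)) * ((1 - b) / (1 + b)) = M / P"
      by (simp only: P_def M_def times_divide_times_eq)
    have l: "1 - 4 * e / ((1 + a) * (1 + b)) = (P - 4 * e) / P"
      using P p by (simp add: P_def diff_divide_distrib)
    have "(1 - 4 * e / ((1 + a) * (1 + b))) / (((1 - a) / (1 + a)) * ((1 - b) / (1 + b)))
        = ((P - 4 * e) / P) / (M / P)" by (simp only: m l)
    also have "\<dots> = (P - 4 * e) / M" using P by simp
    finally have "(1 - 4 * e / ((1 + a) * (1 + b))) / (((1 - a) / (1 + a)) * ((1 - b) / (1 + b)))
        = ((1 + a) * (1 + b) - 4 * e) / ((1 - a) * (1 - b))" by (simp add: P_def M_def)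
    also have "\<dots> = ((1 - a) * (1 - b) + 2 * (a + b - 2 * e)) / ((1 - a) * (1 - b))"
      by (simp add: algebra_simps)
    also have "\<dots> = 1 + 2 * (a + b - 2 * e) / ((1 - a) * (1 - b))"
      using p by (simp add: add_divide_distrib)
    finally show ?thesis .
  qed
  show ?thesis
    unfolding Dk_def re kl_props(2)[OF assms(1)] kl_props(2)[OF assms(2)] d
    using gen by (simp add: a_def[symmetric] b_def[symmetric])
qed

lemma Km_props:
  assumes "c \<in> H2" "z \<in> H2"
  shows "cmod (Km c z) < 1" and "Km c z = 0 \<longleftrightarrow> z = c"
proof -
  show "cmod (Km c z) < 1" unfolding Km_def by (rule kl_props(1)[OF phi_norm_lt[OF assms]])
  have "kl w = 0 \<longleftrightarrow> w = 0" for w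
  proof -
    have "1 + (cmod w)\<^sup>2 > 0" by (simp add: add_pos_nonneg)
    hence "2 / (1 + (cmod w)\<^sup>2) \<noteq> 0" by simp
    thus ?thesis unfolding kl_def mult_eq_0_iff of_real_eq_0_iff by simp
  qed
  moreover have "phi c z = 0 \<longleftrightarrow> z = c" using den_nz[OF assms] by (simp add: phi_def)
  ultimately show "Km c z = 0 \<longleftrightarrow> z = c" by (simp add: Km_def)
qed

lemma Dk_Km:
  assumes "c \<in> H2" "z1 \<in> H2" "z2 \<in> H2"
  shows "Dk (Km c z1) (Km c z2) = 1 + Qf z1 z2"
  unfolding Km_def Dk_kl[OF phi_norm_lt[OF assms(1,2)] phi_norm_lt[OF assms(1,3)]] Qf_phi[OF assms] ..

lemma hdist_Km:
  assumes "c \<in> H2" "z1 \<in> H2" "z2 \<in> H2" "r \<ge> 0"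
  shows "hdist z1 z2 \<le> r \<longleftrightarrow> Dk (Km c z1) (Km c z2) \<le> cosh r"
  using hdist_le_iff[OF assms(2,3,4)] Dk_Km[OF assms(1,2,3)] by simp


definition Nk :: "complex \<Rightarrow> complex \<Rightarrow> real" where "Nk p q = 1 - Re (p * cnj q)"

lemma Re_mult_cnj: "Re (p * cnj q) = Re p * Re q + Im p * Im q" by simp

lemma Nk_sym: "Nk p q = Nk q p" by (simp add: Nk_def mult.commute)

lemma Nk_pos: assumes "cmod p < 1" "cmod q < 1" shows "Nk p q > 0"
proof -
  have "\<bar>Re (p * cnj q)\<bar> \<le> cmod p * cmod q" using abs_Re_le_cmod[of "p * cnj q"] by (simp add: norm_mult)
  also have "\<dots> \<le> 1 * cmod q" using assms by (intro mult_right_mono) auto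
  finally show ?thesis using assms by (simp add: Nk_def)
qed

lemma cs2: "(a * c - b * d)\<^sup>2 \<le> (a\<^sup>2 + b\<^sup>2) * (c\<^sup>2 + d\<^sup>2)" for a b c d :: real
proof -
  have "(a\<^sup>2 + b\<^sup>2) * (c\<^sup>2 + d\<^sup>2) - (a * c - b * d)\<^sup>2 = (a * d + b * c)\<^sup>2"
    by (simp add: power2_eq_square algebra_simps)
  thus ?thesis by (smt (verit) zero_le_power2)
qed

lemma Nk_sq:
  assumes "cmod p < 1"
  shows "(Nk p q)\<^sup>2 \<ge> (1 - (cmod p)\<^sup>2) * (1 - (cmod q)\<^sup>2)"
proof -
  define a where "a = Re p" define b where "b = Im p"
  define c where "c = Re q" define d where "d = Im q"
  have ab: "a\<^sup>2 + b\<^sup>2 < 1" using assms by (simp add: a_def b_def cmod_def)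
  have id: "(Nk p q)\<^sup>2 - (1 - (cmod p)\<^sup>2) * (1 - (cmod q)\<^sup>2) = (a - c)\<^sup>2 + (b - d)\<^sup>2 - (a * d - b * c)\<^sup>2"
    unfolding Nk_def Re_mult_cnj cmod_power2 a_def b_def c_def d_def
    by (simp add: power2_eq_square algebra_simps)
  have "(a * d - b * c)\<^sup>2 = (a * (d - b) - b * (c - a))\<^sup>2" by (simp add: algebra_simps)
  also have "\<dots> \<le> (a\<^sup>2 + b\<^sup>2) * ((d - b)\<^sup>2 + (c - a)\<^sup>2)" by (rule cs2)
  also have "\<dots> \<le> 1 * ((d - b)\<^sup>2 + (c - a)\<^sup>2)" using ab by (intro mult_right_mono) auto
  finally have "(a * d - b * c)\<^sup>2 \<le> (a - c)\<^sup>2 + (b - d)\<^sup>2" by (simp add: power2_commute)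
  thus ?thesis using id by simp
qed

lemma Dk_Nk: "Dk p q = Nk p q / (sq1 p * sq1 q)" by (simp add: Dk_def Nk_def)

lemma Nk_ge:
  assumes "cmod p < 1" "cmod q < 1"
  shows "Nk p q \<ge> sq1 p * sq1 q"
proof -
  have "(sq1 p * sq1 q)\<^sup>2 \<le> (Nk p q)\<^sup>2"
    using Nk_sq[OF assms(1), of q] by (simp add: power_mult_distrib sq1_sq assms)
  thus ?thesis using Nk_pos[OF assms] by (rule power2_le_imp_le[OF _ less_imp_le])
qed

lemma Dk_ge1:
  assumes "cmod p < 1" "cmod q < 1"
  shows "Dk p q \<ge> 1"
  using Nk_ge[OF assms] sq1_pos[OF assms(1)] sq1_pos[OF assms(2)]
  by (simp add: Dk_Nk)

lemma Dk_self: "cmod p < 1 \<Longrightarrow> Dk p p = 1"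
proof -
  assume a: "cmod p < 1"
  have "Re (p * cnj p) = (cmod p)\<^sup>2" by (simp add: complex_norm_square[symmetric] del: complex_norm_square)
  moreover have "sq1 p * sq1 p = 1 - (cmod p)\<^sup>2" using sq1_sq[OF a] by (simp add: power2_eq_square)
  moreover have "1 - (cmod p)\<^sup>2 > 0" using a by (simp add: abs_square_less_1)
  ultimately show ?thesis by (simp add: Dk_def)
qed

lemma disk_convex:
  assumes "cmod y < 1" "cmod z < 1" "0 \<le> t" "t \<le> 1"
  shows "cmod ((1 - t) *\<^sub>R y + t *\<^sub>R z) < 1"
proof -
  have "cmod ((1 - t) *\<^sub>R y + t *\<^sub>R z) \<le> (1 - t) * cmod y + t * cmod z"
    using assms by (metis abs_of_nonneg diff_ge_0_iff_ge norm_scaleR norm_triangle_ineq)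
  also have "\<dots> < 1"
  proof (cases "t = 0")
    case True thus ?thesis using assms by simp
  next
    case False
    hence "t * cmod z < t * 1" using assms by simp
    moreover have "(1 - t) * cmod y \<le> (1 - t) * 1" using assms by (intro mult_left_mono) auto
    ultimately show ?thesis by simp
  qed
  finally show ?thesis .
qed

lemma norm_comb_sq:
  "(cmod ((1 - t) *\<^sub>R y + t *\<^sub>R z))\<^sup>2 = (1 - t)\<^sup>2 * (cmod y)\<^sup>2 + t\<^sup>2 * (cmod z)\<^sup>2 + 2 * t * (1 - t) * Re (y * cnj z)"
  unfolding cmod_power2 by (simp add: power2_eq_square algebra_simps)

lemma Nk_comb_right: "Nk x ((1 - t) *\<^sub>R y + t *\<^sub>R z) = (1 - t) * Nk x y + t * Nk x z"
  by (simp add: Nk_def algebra_simps)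

lemma Nk_comb_left: "Nk ((1 - t) *\<^sub>R y + t *\<^sub>R z) x = (1 - t) * Nk y x + t * Nk z x"
  by (simp add: Nk_def algebra_simps)


lemma sq1_comb_ge:
  assumes "cmod y < 1" "cmod z < 1" "0 \<le> t" "t \<le> 1"
  shows "(1 - t) * sq1 y + t * sq1 z \<le> sq1 ((1 - t) *\<^sub>R y + t *\<^sub>R z)"
proof -
  define r where "r = (1 - t) *\<^sub>R y + t *\<^sub>R z"
  have r: "cmod r < 1" using disk_convex[OF assms] by (simp add: r_def)
  have "((1 - t) * sq1 y + t * sq1 z)\<^sup>2 \<le> (1 - t) * (sq1 y)\<^sup>2 + t * (sq1 z)\<^sup>2"
  proof -
    have "(1 - t) * (sq1 y)\<^sup>2 + t * (sq1 z)\<^sup>2 - ((1 - t) * sq1 y + t * sq1 z)\<^sup>2 = t * (1 - t) * (sq1 y - sq1 z)\<^sup>2"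
      by (simp add: power2_eq_square algebra_simps)
    moreover have "t * (1 - t) * (sq1 y - sq1 z)\<^sup>2 \<ge> 0" using assms by simp
    ultimately show ?thesis by linarith
  qed
  also have "\<dots> = 1 - ((1 - t) * (cmod y)\<^sup>2 + t * (cmod z)\<^sup>2)"
    using assms by (simp add: sq1_sq algebra_simps)
  also have "\<dots> \<le> 1 - (cmod r)\<^sup>2"
  proof -
    have "(1 - t) * (cmod y)\<^sup>2 + t * (cmod z)\<^sup>2 - (cmod r)\<^sup>2 = t * (1 - t) * (cmod (y - z))\<^sup>2"
      unfolding r_def norm_comb_sq cmod_diff_sq by (simp add: power2_eq_square algebra_simps)
    moreover have "t * (1 - t) * (cmod (y - z))\<^sup>2 \<ge> 0" using assms by simp
    ultimately show ?thesis by linarith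
  qed
  also have "\<dots> = (sq1 r)\<^sup>2" using sq1_sq[OF r] by simp
  finally have "((1 - t) * sq1 y + t * sq1 z)\<^sup>2 \<le> (sq1 r)\<^sup>2" .
  thus ?thesis unfolding r_def[symmetric] using sq1_pos[OF r] by (rule power2_le_imp_le[OF _ less_imp_le])
qed

lemma Dk_seg_le:
  assumes "cmod x < 1" "cmod y < 1" "cmod z < 1" "0 \<le> t" "t \<le> 1"
  shows "Dk x ((1 - t) *\<^sub>R y + t *\<^sub>R z) \<le> max (Dk x y) (Dk x z)"
proof -
  define r where "r = (1 - t) *\<^sub>R y + t *\<^sub>R z"
  define M where "M = max (Dk x y) (Dk x z)"
  have r: "cmod r < 1" using disk_convex[OF assms(2-5)] by (simp add: r_def)
  have sx: "sq1 x > 0" "sq1 y > 0" "sq1 z > 0" "sq1 r > 0"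
    using sq1_pos assms r by auto
  have M1: "M \<ge> 1" using Dk_ge1[OF assms(1,2)] by (simp add: M_def)
  have ny: "Nk x y \<le> M * (sq1 x * sq1 y)"
  proof -
    have "Nk x y = Dk x y * (sq1 x * sq1 y)" using sx by (simp add: Dk_Nk)
    also have "\<dots> \<le> M * (sq1 x * sq1 y)" using sx by (intro mult_right_mono) (simp_all add: M_def)
    finally show ?thesis .
  qed
  have nz: "Nk x z \<le> M * (sq1 x * sq1 z)"
  proof -
    have "Nk x z = Dk x z * (sq1 x * sq1 z)" using sx by (simp add: Dk_Nk)
    also have "\<dots> \<le> M * (sq1 x * sq1 z)" using sx by (intro mult_right_mono) (simp_all add: M_def)
    finally show ?thesis .
  qed
  have "Nk x r = (1 - t) * Nk x y + t * Nk x z" unfolding r_def by (rule Nk_comb_right)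
  also have "\<dots> \<le> (1 - t) * (M * (sq1 x * sq1 y)) + t * (M * (sq1 x * sq1 z))"
    using ny nz assms by (intro add_mono mult_left_mono) auto
  also have "\<dots> = M * sq1 x * ((1 - t) * sq1 y + t * sq1 z)" by (simp add: algebra_simps)
  also have "\<dots> \<le> M * sq1 x * sq1 r"
    using sq1_comb_ge[OF assms(2-5)] M1 sx by (simp add: r_def)
  finally have le: "Nk x r \<le> M * (sq1 x * sq1 r)" by (simp add: mult.assoc)
  have "Dk x r = Nk x r / (sq1 x * sq1 r)" by (simp add: Dk_Nk)
  also have "\<dots> \<le> M" using le sx by (subst pos_divide_le_eq) simp_all
  finally show ?thesis by (simp add: r_def M_def)
qed

lemma Dk_additive:
  assumes "cmod x < 1" "cmod y < 1" "0 \<le> t" "t \<le> 1"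
  defines "r \<equiv> (1 - t) *\<^sub>R x + t *\<^sub>R y"
  shows "arcosh (Dk x r) + arcosh (Dk r y) = arcosh (Dk x y)"
proof -
  have r: "cmod r < 1" using disk_convex[OF assms(1-4)] by (simp add: r_def)
  have sx: "sq1 x > 0" "sq1 y > 0" "sq1 r > 0" using sq1_pos assms r by auto
  define c where "c = Dk x y"
  define l where "l = (1 - t) * sq1 x / sq1 r"
  define m where "m = t * sq1 y / sq1 r"
  have c1: "c \<ge> 1" using Dk_ge1[OF assms(1,2)] by (simp add: c_def)
  have lm: "l \<ge> 0" "m \<ge> 0" using sx assms by (simp_all add: l_def m_def)
  have Nxy: "Nk x y = c * sq1 x * sq1 y" using sx by (simp add: c_def Dk_Nk)
  have Nxx: "Nk x x = (sq1 x)\<^sup>2" using assms by (simp add: Nk_def sq1_sq complex_norm_square[symmetric] del: complex_norm_square)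
  have Nyy: "Nk y y = (sq1 y)\<^sup>2" using assms by (simp add: Nk_def sq1_sq complex_norm_square[symmetric] del: complex_norm_square)
  have d1: "Dk x r = l + m * c"
  proof -
    have "Nk x r = (1 - t) * Nk x x + t * Nk x y" unfolding r_def by (rule Nk_comb_right)
    thus ?thesis using sx by (simp add: Dk_Nk Nxx Nxy l_def m_def field_simps power2_eq_square)
  qed
  have d2: "Dk r y = l * c + m"
  proof -
    have "Nk r y = (1 - t) * Nk x y + t * Nk y y" unfolding r_def by (rule Nk_comb_left)
    thus ?thesis using sx by (simp add: Dk_Nk Nyy Nxy l_def m_def field_simps power2_eq_square)
  qed
  have norm1: "l\<^sup>2 + m\<^sup>2 + 2 * l * m * c = 1"
  proof -
    have "(sq1 r)\<^sup>2 = 1 - (cmod r)\<^sup>2" using sq1_sq[OF r] .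
    also have "\<dots> = (1 - t)\<^sup>2 * (sq1 x)\<^sup>2 + t\<^sup>2 * (sq1 y)\<^sup>2 + 2 * t * (1 - t) * Nk x y"
      unfolding r_def norm_comb_sq sq1_sq[OF assms(1)] sq1_sq[OF assms(2)] Nk_def
      by (simp add: power2_eq_square algebra_simps)
    finally have "(sq1 r)\<^sup>2 = (1 - t)\<^sup>2 * (sq1 x)\<^sup>2 + t\<^sup>2 * (sq1 y)\<^sup>2 + 2 * t * (1 - t) * (c * sq1 x * sq1 y)"
      by (simp add: Nxy)
    hence num: "((1 - t) * sq1 x)\<^sup>2 + (t * sq1 y)\<^sup>2 + 2 * ((1 - t) * sq1 x) * (t * sq1 y) * c = (sq1 r)\<^sup>2"
      by (simp add: power2_eq_square algebra_simps)
    have "l\<^sup>2 + m\<^sup>2 + 2 * l * m * c = (((1 - t) * sq1 x)\<^sup>2 + (t * sq1 y)\<^sup>2 + 2 * ((1 - t) * sq1 x) * (t * sq1 y) * c) / (sq1 r)\<^sup>2"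
      using sx by (simp add: l_def m_def field_simps power2_eq_square)
    also have "\<dots> = 1" using num sx by simp
    finally show ?thesis .
  qed
  define A where "A = arcosh (l + m * c)"
  define B where "B = arcosh (l * c + m)"
  have e1: "(l + m * c)\<^sup>2 - 1 = m\<^sup>2 * (c\<^sup>2 - 1)" using norm1 by (simp add: power2_eq_square algebra_simps)
  have e2: "(l * c + m)\<^sup>2 - 1 = l\<^sup>2 * (c\<^sup>2 - 1)" using norm1 by (simp add: power2_eq_square algebra_simps)
  have g1: "l + m * c \<ge> 1" using d1 Dk_ge1[OF assms(1) r] by simp
  have g2: "l * c + m \<ge> 1" using d2 Dk_ge1[OF r assms(2)] by simp
  have "cosh (A + B) = (l + m * c) * (l * c + m) + sqrt ((l + m * c)\<^sup>2 - 1) * sqrt ((l * c + m)\<^sup>2 - 1)"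
    using g1 g2 by (simp add: A_def B_def cosh_add sinh_arcosh_real)
  also have "\<dots> = (l + m * c) * (l * c + m) + m * l * (c\<^sup>2 - 1)"
    using lm c1 by (simp add: e1 e2 real_sqrt_mult)
  also have "\<dots> = c * (l\<^sup>2 + m\<^sup>2 + 2 * l * m * c)" by (simp add: power2_eq_square algebra_simps)
  also have "\<dots> = c" using norm1 by simp
  finally have "cosh (A + B) = c" .
  moreover have "A + B \<ge> 0" using g1 g2 by (simp add: A_def B_def)
  ultimately have "A + B = arcosh c" using arcosh_cosh_real by metis
  thus ?thesis by (simp add: A_def B_def d1 d2 c_def)
qed


lemma gram_identity:
  fixes x y z :: complex
  defines "A \<equiv> Nk x y" and "B \<equiv> Nk y z" and "C \<equiv> Nk x z"
  defines "sx \<equiv> 1 - (cmod x)\<^sup>2" and "sy \<equiv> 1 - (cmod y)\<^sup>2" and "sz \<equiv> 1 - (cmod z)\<^sup>2"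
  shows "sx * sy * sz + 2 * A * B * C - A\<^sup>2 * sz - B\<^sup>2 * sx - C\<^sup>2 * sy =
    ((Re y * Im z - Im y * Re z) - (Re x * Im z - Im x * Re z) + (Re x * Im y - Im x * Re y))\<^sup>2"
  unfolding A_def B_def C_def sx_def sy_def sz_def Nk_def Re_mult_cnj cmod_power2
  by (simp add: power2_eq_square algebra_simps)

lemma Dk_triangle_cosh:
  assumes "cmod x < 1" "cmod y < 1" "cmod z < 1"
  shows "(Dk x z - Dk x y * Dk y z)\<^sup>2 \<le> ((Dk x y)\<^sup>2 - 1) * ((Dk y z)\<^sup>2 - 1)"
proof -
  define a where "a = Dk x y" define b where "b = Dk y z" define c where "c = Dk x z"
  define px where "px = sq1 x" define py where "py = sq1 y" define pz where "pz = sq1 z"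
  have p: "px > 0" "py > 0" "pz > 0" using sq1_pos assms by (auto simp: px_def py_def pz_def)
  have A: "Nk x y = a * px * py" using p by (simp add: a_def Dk_Nk px_def py_def)
  have B: "Nk y z = b * py * pz" using p by (simp add: b_def Dk_Nk py_def pz_def)
  have C: "Nk x z = c * px * pz" using p by (simp add: c_def Dk_Nk px_def pz_def)
  have G: "px\<^sup>2 * py\<^sup>2 * pz\<^sup>2 + 2 * (a * px * py) * (b * py * pz) * (c * px * pz)
       - (a * px * py)\<^sup>2 * pz\<^sup>2 - (b * py * pz)\<^sup>2 * px\<^sup>2 - (c * px * pz)\<^sup>2 * py\<^sup>2 \<ge> 0"
    using gram_identity[of x y z] unfolding A B C
    by (simp add: px_def py_def pz_def sq1_sq assms)
  have "px\<^sup>2 * py\<^sup>2 * pz\<^sup>2 + 2 * (a * px * py) * (b * py * pz) * (c * px * pz)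
       - (a * px * py)\<^sup>2 * pz\<^sup>2 - (b * py * pz)\<^sup>2 * px\<^sup>2 - (c * px * pz)\<^sup>2 * py\<^sup>2
      = (px * py * pz)\<^sup>2 * (1 + 2 * a * b * c - a\<^sup>2 - b\<^sup>2 - c\<^sup>2)"
    by (simp add: power2_eq_square algebra_simps)
  with G have "(px * py * pz)\<^sup>2 * (1 + 2 * a * b * c - a\<^sup>2 - b\<^sup>2 - c\<^sup>2) \<ge> 0" by simp
  moreover have "(px * py * pz)\<^sup>2 > 0" using p by simp
  ultimately have "1 + 2 * a * b * c - a\<^sup>2 - b\<^sup>2 - c\<^sup>2 \<ge> 0"
    by (simp add: zero_le_mult_iff)
  moreover have "(a\<^sup>2 - 1) * (b\<^sup>2 - 1) - (c - a * b)\<^sup>2 = 1 + 2 * a * b * c - a\<^sup>2 - b\<^sup>2 - c\<^sup>2"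
    by (simp add: power2_eq_square algebra_simps)
  ultimately show ?thesis by (simp add: a_def b_def c_def)
qed

lemma Dk_triangle:
  assumes "cmod x < 1" "cmod y < 1" "cmod z < 1"
  shows "arcosh (Dk x z) \<le> arcosh (Dk x y) + arcosh (Dk y z)"
proof -
  define a where "a = Dk x y" define b where "b = Dk y z" define c where "c = Dk x z"
  have a1: "a \<ge> 1" "b \<ge> 1" "c \<ge> 1" using Dk_ge1 assms by (auto simp: a_def b_def c_def)
  have tri: "(c - a * b)\<^sup>2 \<le> (a\<^sup>2 - 1) * (b\<^sup>2 - 1)"
    using Dk_triangle_cosh[OF assms] by (simp add: a_def b_def c_def)
  have "c \<le> a * b + sqrt (a\<^sup>2 - 1) * sqrt (b\<^sup>2 - 1)"
  proof (cases "c \<le> a * b")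
    case True
    moreover have "sqrt (a\<^sup>2 - 1) * sqrt (b\<^sup>2 - 1) \<ge> 0" using a1 by simp
    ultimately show ?thesis by linarith
  next
    case False
    have "c - a * b = sqrt ((c - a * b)\<^sup>2)" using False by simp
    also have "\<dots> \<le> sqrt ((a\<^sup>2 - 1) * (b\<^sup>2 - 1))" using tri by (rule real_sqrt_le_mono)
    also have "\<dots> = sqrt (a\<^sup>2 - 1) * sqrt (b\<^sup>2 - 1)" by (simp add: real_sqrt_mult)
    finally show ?thesis by linarith
  qed
  also have "\<dots> = cosh (arcosh a + arcosh b)"
    using a1 by (simp add: cosh_add sinh_arcosh_real)
  finally have "c \<le> cosh (arcosh a + arcosh b)" .
  moreover have "arcosh a + arcosh b \<ge> 0" using a1 by simp
  ultimately have "arcosh c \<le> arcosh a + arcosh b" using arcosh_le_iff a1 by blast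
  thus ?thesis by (simp add: a_def b_def c_def)
qed

lemma Dk_cross:
  assumes "cmod x < 1" "cmod y < 1" "cmod z < 1" "cmod w < 1"
    and "0 \<le> t" "t \<le> 1" "0 \<le> u" "u \<le> 1"
    and "(1 - t) *\<^sub>R x + t *\<^sub>R y = (1 - u) *\<^sub>R z + u *\<^sub>R w"
  shows "arcosh (Dk x w) + arcosh (Dk y z) \<le> arcosh (Dk x y) + arcosh (Dk z w)"
proof -
  define X where "X = (1 - t) *\<^sub>R x + t *\<^sub>R y"
  have X: "cmod X < 1" using disk_convex[OF assms(1,2,5,6)] by (simp add: X_def)
  have X2: "X = (1 - u) *\<^sub>R z + u *\<^sub>R w" using assms(9) by (simp add: X_def)
  have ad1: "arcosh (Dk x X) + arcosh (Dk X y) = arcosh (Dk x y)"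
    unfolding X_def by (rule Dk_additive[OF assms(1,2,5,6)])
  have ad2: "arcosh (Dk z X) + arcosh (Dk X w) = arcosh (Dk z w)"
    unfolding X2 by (rule Dk_additive[OF assms(3,4,7,8)])
  have t1: "arcosh (Dk x w) \<le> arcosh (Dk x X) + arcosh (Dk X w)"
    by (rule Dk_triangle[OF assms(1) X assms(4)])
  have t2: "arcosh (Dk y z) \<le> arcosh (Dk y X) + arcosh (Dk X z)"
    by (rule Dk_triangle[OF assms(2) X assms(3)])
  have s1: "Dk y X = Dk X y" "Dk X z = Dk z X" by (simp_all add: Dk_sym)
  show ?thesis using ad1 ad2 t1 t2[unfolded s1] by linarith
qed

lemma Dk_cross_T:
  assumes "cmod x < 1" "cmod y < 1" "cmod z < 1" "cmod w < 1"
    and "0 \<le> t" "t \<le> 1" "0 \<le> u" "u \<le> 1"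
    and "(1 - t) *\<^sub>R x + t *\<^sub>R y = (1 - u) *\<^sub>R z + u *\<^sub>R w"
    and "Dk x y \<le> T" "Dk z w \<le> T"
  shows "Dk x w \<le> T \<or> Dk y z \<le> T"
proof (rule ccontr)
  assume "\<not> ?thesis"
  hence n: "Dk x w > T" "Dk y z > T" by auto
  have T1: "T \<ge> 1" using Dk_ge1[OF assms(1,2)] assms(10) by simp
  have g: "Dk x y \<ge> 1" "Dk z w \<ge> 1" using Dk_ge1 assms by auto
  have "arcosh (Dk x y) \<le> arcosh T" "arcosh (Dk z w) \<le> arcosh T"
    using assms(10,11) g T1 arcosh_less_iff_real[of T "Dk x y"] arcosh_less_iff_real[of T "Dk z w"]
    by (auto simp: not_less[symmetric])
  moreover have "arcosh (Dk x w) > arcosh T" "arcosh (Dk y z) > arcosh T"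
    using n T1 by simp_all
  ultimately show False using Dk_cross[OF assms(1-9)] by linarith
qed


lemma seg_ray0:
  assumes "A > 0" "B > 0" "\<alpha> \<le> \<gamma>" "\<gamma> \<le> \<beta>" "\<beta> - \<alpha> < pi/2"
  shows "\<exists>t s. 0 \<le> t \<and> t \<le> 1 \<and> s > 0 \<and> (1 - t) *\<^sub>R rcis A \<alpha> + t *\<^sub>R rcis B \<beta> = rcis s \<gamma>"
proof -
  define d1 where "d1 = \<gamma> - \<alpha>"
  define d2 where "d2 = \<beta> - \<gamma>"
  have d: "0 \<le> d1" "d1 < pi/2" "0 \<le> d2" "d2 < pi/2" using assms by (auto simp: d1_def d2_def)
  have s1: "sin d1 \<ge> 0" "sin d2 \<ge> 0" using d by (auto intro!: sin_ge_zero)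
  have c1: "cos d1 > 0" "cos d2 > 0" using d by (auto intro!: cos_gt_zero_pi)
  have al: "\<alpha> = \<gamma> - d1" and be: "\<beta> = \<gamma> + d2" by (simp_all add: d1_def d2_def)
  have main: "(1 - t) *\<^sub>R rcis A \<alpha> + t *\<^sub>R rcis B \<beta> = rcis ((1 - t) * A * cos d1 + t * B * cos d2) \<gamma>"
    if K: "(1 - t) * A * sin d1 = t * B * sin d2" for t
  proof -
    have re: "(1 - t) * (A * cos \<alpha>) + t * (B * cos \<beta>) = ((1 - t) * A * cos d1 + t * B * cos d2) * cos \<gamma>"
    proof -
      have "(1 - t) * (A * cos \<alpha>) + t * (B * cos \<beta>) =
        cos \<gamma> * ((1 - t) * A * cos d1 + t * B * cos d2) + sin \<gamma> * ((1 - t) * A * sin d1 - t * B * sin d2)"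
        unfolding al be by (simp add: cos_diff cos_add algebra_simps)
      thus ?thesis using K by simp
    qed
    have im: "(1 - t) * (A * sin \<alpha>) + t * (B * sin \<beta>) = ((1 - t) * A * cos d1 + t * B * cos d2) * sin \<gamma>"
    proof -
      have "(1 - t) * (A * sin \<alpha>) + t * (B * sin \<beta>) =
        sin \<gamma> * ((1 - t) * A * cos d1 + t * B * cos d2) - cos \<gamma> * ((1 - t) * A * sin d1 - t * B * sin d2)"
        unfolding al be by (simp add: sin_diff sin_add algebra_simps)
      thus ?thesis using K by simp
    qed
    show ?thesis using re im by (simp add: complex_eq_iff)
  qed
  show ?thesis
  proof (cases "A * sin d1 + B * sin d2 = 0")
    case True
    have "A * sin d1 \<ge> 0" "B * sin d2 \<ge> 0" using s1 assms by simp_all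
    hence "A * sin d1 = 0" using True by linarith
    hence "sin d1 = 0" using assms by simp
    hence "d1 = 0" using d sin_gt_zero[of d1] by (cases "d1 = 0") auto
    hence K: "(1 - 0) * A * sin d1 = 0 * B * sin d2" by simp
    show ?thesis
      by (rule exI[of _ 0], rule exI[of _ "(1 - 0) * A * cos d1 + 0 * B * cos d2"])
         (use main[OF K] assms c1 in simp)
  next
    case False
    define t where "t = A * sin d1 / (A * sin d1 + B * sin d2)"
    have "A * sin d1 \<ge> 0" "B * sin d2 \<ge> 0" using s1 assms by simp_all
    hence pos: "A * sin d1 + B * sin d2 > 0" using False by linarith
    have t: "0 \<le> t" "t \<le> 1" using pos s1 assms by (auto simp: t_def divide_le_eq)
    have K: "(1 - t) * A * sin d1 = t * B * sin d2"
      using pos by (simp add: t_def field_simps)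
    have sp: "(1 - t) * A * cos d1 + t * B * cos d2 > 0"
    proof (cases "t = 0")
      case True thus ?thesis using assms c1 by simp
    next
      case False
      hence "t * B * cos d2 > 0" using t assms c1 by simp
      moreover have "(1 - t) * A * cos d1 \<ge> 0" using t assms c1 by simp
      ultimately show ?thesis by linarith
    qed
    show ?thesis using main[OF K] t sp by blast
  qed
qed

lemma seg_ray:
  assumes "A > 0" "B > 0" "min \<alpha> \<beta> \<le> \<gamma>" "\<gamma> \<le> max \<alpha> \<beta>" "\<bar>\<beta> - \<alpha>\<bar> < pi/2"
  shows "\<exists>t s. 0 \<le> t \<and> t \<le> 1 \<and> s > 0 \<and> (1 - t) *\<^sub>R rcis A \<alpha> + t *\<^sub>R rcis B \<beta> = rcis s \<gamma>"
proof (cases "\<alpha> \<le> \<beta>")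
  case True
  thus ?thesis using seg_ray0[of A B \<alpha> \<gamma> \<beta>] assms by auto
next
  case False
  then obtain t s where ts: "0 \<le> t" "t \<le> 1" "s > 0" "(1 - t) *\<^sub>R rcis B \<beta> + t *\<^sub>R rcis A \<alpha> = rcis s \<gamma>"
    using seg_ray0[of B A \<beta> \<gamma> \<alpha>] assms by auto
  show ?thesis
    by (rule exI[of _ "1 - t"], rule exI[of _ s]) (use ts in \<open>auto simp: add.commute\<close>)
qed


lemma scaleR_rcis: "l *\<^sub>R rcis r \<theta> = rcis (l * r) \<theta>"
  by (simp add: rcis_def scaleR_conv_of_real)

lemma cmod_rcis_pos: "r \<ge> 0 \<Longrightarrow> cmod (rcis r \<theta>) = r"
  by (simp add: rcis_def norm_mult)

lemma key1:
  assumes "cmod u < 1" "cmod c < 1" "cmod a < 1"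
    and "Dk 0 a \<le> T" "Dk 0 u \<le> T" "Dk 0 c > T" "Dk u c \<le> T" "Dk a u > T"
    and "0 \<le> t" "t \<le> 1" "(1 - t) *\<^sub>R u + t *\<^sub>R c = rcis s \<theta>" "s > 0"
    and "a = rcis (cmod a) \<theta>" "a \<noteq> 0"
  shows False
proof -
  define P where "P = (1 - t) *\<^sub>R u + t *\<^sub>R c"
  have P: "cmod P < 1" using disk_convex[OF assms(1,2,9,10)] by (simp add: P_def)
  have Ps: "P = rcis s \<theta>" using assms(11) by (simp add: P_def)
  have a0: "cmod a > 0" using assms(14) by simp
  have T1: "T \<ge> 1" using Dk_ge1[OF assms(1,2)] assms(7) by simp
  show False
  proof (cases "s \<le> cmod a")
    case True
    define l where "l = s / cmod a"
    have l: "0 \<le> l" "l \<le> 1" using True a0 assms(12) by (auto simp: l_def)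
    have "(1 - l) *\<^sub>R 0 + l *\<^sub>R a = rcis s \<theta>"
      using a0 by (subst assms(13)) (simp add: scaleR_rcis l_def)
    hence eq: "(1 - l) *\<^sub>R 0 + l *\<^sub>R a = (1 - t) *\<^sub>R u + t *\<^sub>R c" using Ps by (simp add: P_def)
    have "Dk 0 c \<le> T \<or> Dk a u \<le> T"
      by (rule Dk_cross_T[OF _ assms(3) assms(1) assms(2) l assms(9,10) eq assms(4) assms(7)]) simp
    thus False using assms(6,8) by simp
  next
    case False
    define m where "m = cmod a / s"
    have m: "0 \<le> m" "m \<le> 1" using False a0 assms(12) by (auto simp: m_def)
    have "(1 - m) *\<^sub>R 0 + m *\<^sub>R P = a"
      using assms(12) by (subst assms(13)) (simp add: Ps scaleR_rcis m_def)
    hence "Dk u a = Dk u ((1 - m) *\<^sub>R 0 + m *\<^sub>R P)" by simp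
    also have "\<dots> \<le> max (Dk u 0) (Dk u P)"
      by (rule Dk_seg_le[OF assms(1) _ P m]) simp
    also have "Dk u P \<le> max (Dk u u) (Dk u c)"
      unfolding P_def by (rule Dk_seg_le[OF assms(1) assms(1) assms(2) assms(9,10)])
    hence "max (Dk u 0) (Dk u P) \<le> T"
      using Dk_self[OF assms(1)] T1 assms(5,7) Dk_sym[of u 0] by auto
    finally have "Dk u a \<le> T" .
    thus False using assms(8) Dk_sym[of a u] by simp
  qed
qed

lemma key:
  assumes "cmod x < 1" "cmod c < 1" "cmod y < 1" "cmod a < 1"
    and "x \<noteq> 0" "c \<noteq> 0" "y \<noteq> 0" "a \<noteq> 0"
    and "Dk 0 x \<le> T" "Dk 0 y \<le> T" "Dk 0 a \<le> T" "Dk 0 c > T"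
    and "Dk x c \<le> T" "Dk c y \<le> T" "Dk a x > T" "Dk a y > T"
    and "x = rcis (cmod x) \<theta>x" "c = rcis (cmod c) \<theta>c" "y = rcis (cmod y) \<theta>y" "a = rcis (cmod a) \<theta>a"
    and "\<bar>\<theta>c - \<theta>x\<bar> < pi/2" "\<bar>\<theta>y - \<theta>c\<bar> < pi/2"
    and "min \<theta>x \<theta>y \<le> \<theta>a" "\<theta>a \<le> max \<theta>x \<theta>y"
  shows False
proof -
  have "(min \<theta>x \<theta>c \<le> \<theta>a \<and> \<theta>a \<le> max \<theta>x \<theta>c) \<or> (min \<theta>y \<theta>c \<le> \<theta>a \<and> \<theta>a \<le> max \<theta>y \<theta>c)"
    using assms(23,24) by linarith
  thus False
  proof
    assume h: "min \<theta>x \<theta>c \<le> \<theta>a \<and> \<theta>a \<le> max \<theta>x \<theta>c"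
    obtain t s where ts: "0 \<le> t" "t \<le> 1" "s > 0"
      "(1 - t) *\<^sub>R rcis (cmod x) \<theta>x + t *\<^sub>R rcis (cmod c) \<theta>c = rcis s \<theta>a"
      using seg_ray[of "cmod x" "cmod c" \<theta>x \<theta>c \<theta>a] h assms(5,6,21) by auto
    have eq: "(1 - t) *\<^sub>R x + t *\<^sub>R c = rcis s \<theta>a" using ts(4) assms(17,18) by simp
    show False by (rule key1[OF assms(1,2,4,11,9,12,13,15) ts(1,2) eq ts(3) assms(20,8)])
  next
    assume h: "min \<theta>y \<theta>c \<le> \<theta>a \<and> \<theta>a \<le> max \<theta>y \<theta>c"
    have d: "\<bar>\<theta>c - \<theta>y\<bar> < pi/2" using assms(22) by linarith
    obtain t s where ts: "0 \<le> t" "t \<le> 1" "s > 0"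
      "(1 - t) *\<^sub>R rcis (cmod y) \<theta>y + t *\<^sub>R rcis (cmod c) \<theta>c = rcis s \<theta>a"
      using seg_ray[of "cmod y" "cmod c" \<theta>y \<theta>c \<theta>a] h assms(6,7) d by auto
    have eq: "(1 - t) *\<^sub>R y + t *\<^sub>R c = rcis s \<theta>a" using ts(4) assms(18,19) by simp
    have yc: "Dk y c \<le> T" using assms(14) Dk_sym[of c y] by simp
    show False by (rule key1[OF assms(3,2,4,11,10,12) yc assms(16) ts(1,2) eq ts(3) assms(20,8)])
  qed
qed

lemma arg_bound:
  assumes "w \<noteq> 0" "0 \<le> \<phi>" "\<phi> \<le> pi" "Re w > cos \<phi> * cmod w"
  shows "\<bar>Arg w\<bar> < \<phi>"
proof (rule ccontr)
  assume "\<not> ?thesis"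
  hence ge: "\<phi> \<le> \<bar>Arg w\<bar>" by simp
  have "\<bar>Arg w\<bar> \<le> pi" using Arg_bounded[of w] by auto
  hence "cos \<bar>Arg w\<bar> \<le> cos \<phi>" using ge assms by (intro cos_monotone_0_pi_le) auto
  moreover have "cos \<bar>Arg w\<bar> = Re w / cmod w" using cos_Arg[OF assms(1)] by (simp add: cos_abs_real)
  moreover have "Re w / cmod w > cos \<phi>" using assms(1,4) by (simp add: pos_less_divide_eq)
  ultimately show False by simp
qed

lemma lift_step:
  assumes "x \<noteq> 0" "y \<noteq> 0" "x = rcis (cmod x) \<theta>"
  shows "y = rcis (cmod y) (\<theta> + Arg (y / x))"
proof -
  have "y = x * (y / x)" using assms(1) by simp
  also have "\<dots> = rcis (cmod x) \<theta> * rcis (cmod (y / x)) (Arg (y / x))"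
    using assms(3) rcis_cmod_Arg[of "y / x"] by simp
  also have "\<dots> = rcis (cmod y) (\<theta> + Arg (y / x))"
    using assms(1) by (simp add: rcis_mult norm_divide)
  finally show ?thesis .
qed

lemma edge_re:
  assumes "cmod u < 1" "cmod c < 1" "Dk u c \<le> T" "Dk 0 c > T" "T \<ge> 0"
  shows "Re (u * cnj c) > 1 - sq1 u"
proof -
  have s: "sq1 u > 0" "sq1 c > 0" using sq1_pos assms by auto
  have "T * sq1 c < 1" using assms(4) s by (simp add: Dk_0 pos_less_divide_eq mult.commute)
  hence "sq1 u * (T * sq1 c) < sq1 u * 1" using s by (intro mult_strict_left_mono) auto
  moreover have "Nk u c = Dk u c * (sq1 u * sq1 c)" using s by (simp add: Dk_Nk)
  moreover have "Dk u c * (sq1 u * sq1 c) \<le> T * (sq1 u * sq1 c)" using assms(3) s by (intro mult_right_mono) auto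
  ultimately have "Nk u c < sq1 u" by (simp add: mult.commute mult.left_commute)
  thus ?thesis by (simp add: Nk_def)
qed

lemma arg_pair:
  assumes "u \<noteq> 0" "c \<noteq> 0" "0 \<le> \<phi>" "\<phi> \<le> pi" "Re (u * cnj c) > cos \<phi> * cmod u * cmod c"
  shows "\<bar>Arg (c / u)\<bar> < \<phi>" "\<bar>Arg (u / c)\<bar> < \<phi>"
proof -
  have re: "Re (c * cnj u) = Re (u * cnj c)" by (simp add: algebra_simps)
  have u2: "(cmod u)\<^sup>2 > 0" "(cmod c)\<^sup>2 > 0" using assms(1,2) by simp_all
  have "Re (c / u) = Re (c * cnj u) / (cmod u)\<^sup>2"
    by (simp add: Re_divide cmod_power2)
  also have "\<dots> = Re (u * cnj c) / (cmod u)\<^sup>2" using re by simp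
  also have "\<dots> > (cos \<phi> * cmod u * cmod c) / (cmod u)\<^sup>2"
    by (rule divide_strict_right_mono[OF assms(5) u2(1)])
  also have "(cos \<phi> * cmod u * cmod c) / (cmod u)\<^sup>2 = cos \<phi> * cmod (c / u)"
    using assms(1) by (simp add: norm_divide power2_eq_square)
  finally show "\<bar>Arg (c / u)\<bar> < \<phi>" using assms by (intro arg_bound) auto
  have "Re (u / c) = Re (u * cnj c) / (cmod c)\<^sup>2"
    by (simp add: Re_divide cmod_power2)
  also have "\<dots> > (cos \<phi> * cmod u * cmod c) / (cmod c)\<^sup>2"
    by (rule divide_strict_right_mono[OF assms(5) u2(2)])
  also have "(cos \<phi> * cmod u * cmod c) / (cmod c)\<^sup>2 = cos \<phi> * cmod (u / c)"
    using assms(2) by (simp add: norm_divide power2_eq_square)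
  finally show "\<bar>Arg (u / c)\<bar> < \<phi>" using assms by (intro arg_bound) auto
qed


definition phib :: "real \<Rightarrow> complex \<Rightarrow> real" where
  "phib T u = (if (cmod u)\<^sup>2 \<le> (T - 1) / (T + 1) then pi/2 else pi/6)"

lemma sqrt3_bound: "sqrt 3 / 2 < (0.92::real)"
proof -
  have "sqrt 3 < sqrt (1.84\<^sup>2)" by (subst real_sqrt_less_iff) (simp add: power2_eq_square)
  thus ?thesis by simp
qed

lemma edge_phi:
  assumes "T \<ge> 312" "cmod u < 1" "cmod c < 1" "u \<noteq> 0" "c \<noteq> 0" "Dk u c \<le> T" "Dk 0 c > T"
  shows "\<bar>Arg (c / u)\<bar> < phib T u \<and> \<bar>Arg (u / c)\<bar> < phib T u"
proof -
  have R: "Re (u * cnj c) > 1 - sq1 u" using edge_re[OF assms(2,3,6,7)] assms(1) by simp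
  have uc: "cmod u * cmod c \<le> 1"
    using assms(2,3) by (metis less_imp_le mult_le_one norm_ge_zero)
  show ?thesis
  proof (cases "(cmod u)\<^sup>2 \<le> (T - 1) / (T + 1)")
    case True
    have "sq1 u < 1" using assms(2,4) unfolding sq1_def by simp
    hence "Re (u * cnj c) > cos (pi/2) * cmod u * cmod c" using R by simp
    from arg_pair[OF assms(4,5) _ _ this] True show ?thesis by (simp add: phib_def)
  next
    case False
    have "(sq1 u)\<^sup>2 = 1 - (cmod u)\<^sup>2" using sq1_sq[OF assms(2)] .
    also have "\<dots> < 1 - (T - 1) / (T + 1)" using False by simp
    also have "\<dots> = 2 / (T + 1)" using assms(1) by (simp add: field_simps)
    also have "\<dots> \<le> 2 / 313" using assms(1) by (intro divide_left_mono) auto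
    also have "\<dots> < (0.08)\<^sup>2" by (simp add: power2_eq_square)
    finally have "sq1 u < 0.08" by (rule power2_less_imp_less) simp
    hence "Re (u * cnj c) > 0.92" using R by simp
    moreover have "cos (pi/6) * cmod u * cmod c \<le> cos (pi/6) * 1"
      using uc by (simp add: mult.assoc cos_30)
    moreover have "cos (pi/6) < 0.92" using sqrt3_bound by (simp add: cos_30)
    ultimately have "Re (u * cnj c) > cos (pi/6) * cmod u * cmod c" by linarith
    from arg_pair[OF assms(4,5) _ _ this] False show ?thesis by (simp add: phib_def)
  qed
qed

lemma near_pair:
  assumes "T \<ge> 1" "cmod u < 1" "cmod w < 1"
    "(cmod u)\<^sup>2 \<le> (T - 1) / (T + 1)" "(cmod w)\<^sup>2 \<le> (T - 1) / (T + 1)"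
  shows "Dk u w \<le> T"
proof -
  define k where "k = (T - 1) / (T + 1)"
  have k: "0 \<le> k" "k < 1" using assms(1) by (auto simp: k_def)
  have "Nk u w \<le> 1 + cmod u * cmod w"
  proof -
    have "- Re (u * cnj w) \<le> cmod (u * cnj w)" using abs_Re_le_cmod[of "u * cnj w"] by linarith
    thus ?thesis by (simp add: Nk_def norm_mult)
  qed
  also have "cmod u * cmod w \<le> k"
  proof -
    have "2 * (cmod u * cmod w) \<le> (cmod u)\<^sup>2 + (cmod w)\<^sup>2" using sum_squares_bound[of "cmod u" "cmod w"] by (simp add: power2_eq_square)
    thus ?thesis using assms(4,5) by (simp add: k_def)
  qed
  finally have N: "Nk u w \<le> 1 + k" by simp
  have su: "sq1 u \<ge> sqrt (1 - k)" "sq1 w \<ge> sqrt (1 - k)"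
    using assms(4,5) by (auto simp: sq1_def k_def)
  have "sqrt (1 - k) * sqrt (1 - k) \<le> sq1 u * sq1 w" using su k sq1_pos[OF assms(2)] by (intro mult_mono) auto
  hence S: "1 - k \<le> sq1 u * sq1 w" using k by simp
  have pos: "1 - k > 0" using k by simp
  have "Dk u w = Nk u w / (sq1 u * sq1 w)" by (simp add: Dk_Nk)
  also have "\<dots> \<le> (1 + k) / (1 - k)"
    using N S pos Nk_pos[OF assms(2,3)] by (intro frac_le) auto
  also have "(1 + k) / (1 - k) = T" using assms(1) by (simp add: k_def field_simps)
  finally show ?thesis .
qed


lemma phib_le: "phib T u \<le> pi/2" by (simp add: phib_def)

lemma rcis_cancel:
  assumes "r > 0" "rcis r a = rcis r b"
  shows "cis a = cis b"
  using assms by (simp add: rcis_def)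

lemma octagon:
  fixes uN uE uS uW c1 c2 c3 c4 :: complex and T :: real
  assumes T: "T \<ge> 312"
  and d: "cmod uN < 1" "cmod uE < 1" "cmod uS < 1" "cmod uW < 1"
         "cmod c1 < 1" "cmod c2 < 1" "cmod c3 < 1" "cmod c4 < 1"
  and nz: "uN \<noteq> 0" "uE \<noteq> 0" "uS \<noteq> 0" "uW \<noteq> 0" "c1 \<noteq> 0" "c2 \<noteq> 0" "c3 \<noteq> 0" "c4 \<noteq> 0"
  and sp: "Dk 0 uN \<le> T" "Dk 0 uE \<le> T" "Dk 0 uS \<le> T" "Dk 0 uW \<le> T"
  and co: "Dk 0 c1 > T" "Dk 0 c2 > T" "Dk 0 c3 > T" "Dk 0 c4 > T"
  and ed: "Dk uN c1 \<le> T" "Dk uE c1 \<le> T" "Dk uE c2 \<le> T" "Dk uS c2 \<le> T"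
          "Dk uS c3 \<le> T" "Dk uW c3 \<le> T" "Dk uW c4 \<le> T" "Dk uN c4 \<le> T"
  and na: "Dk uN uE > T" "Dk uN uS > T" "Dk uN uW > T" "Dk uE uS > T" "Dk uE uW > T" "Dk uS uW > T"
  shows False
proof -
  have T1: "T \<ge> 1" using T by simp
  note E = edge_phi[OF T]
  have e1: "\<bar>Arg (c1 / uN)\<bar> < phib T uN" using E[OF d(1,5) nz(1,5) ed(1) co(1)] by simp
  have e2: "\<bar>Arg (uE / c1)\<bar> < phib T uE" using E[OF d(2,5) nz(2,5) ed(2) co(1)] by simp
  have e3: "\<bar>Arg (c2 / uE)\<bar> < phib T uE" using E[OF d(2,6) nz(2,6) ed(3) co(2)] by simp
  have e4: "\<bar>Arg (uS / c2)\<bar> < phib T uS" using E[OF d(3,6) nz(3,6) ed(4) co(2)] by simp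
  have e5: "\<bar>Arg (c3 / uS)\<bar> < phib T uS" using E[OF d(3,7) nz(3,7) ed(5) co(3)] by simp
  have e6: "\<bar>Arg (uW / c3)\<bar> < phib T uW" using E[OF d(4,7) nz(4,7) ed(6) co(3)] by simp
  have e7: "\<bar>Arg (c4 / uW)\<bar> < phib T uW" using E[OF d(4,8) nz(4,8) ed(7) co(4)] by simp
  have e8: "\<bar>Arg (uN / c4)\<bar> < phib T uN" using E[OF d(1,8) nz(1,8) ed(8) co(4)] by simp
  define k where "k = (T - 1) / (T + 1)"
  have nn: "\<not> ((cmod a)\<^sup>2 \<le> k \<and> (cmod b)\<^sup>2 \<le> k)" if "cmod a < 1" "cmod b < 1" "Dk a b > T" for a b
    using near_pair[OF T1 that(1,2)] that(3) by (auto simp: k_def)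
  have n1: "\<not> ((cmod uN)\<^sup>2 \<le> k \<and> (cmod uE)\<^sup>2 \<le> k)" by (rule nn[OF d(1,2) na(1)])
  have n2: "\<not> ((cmod uN)\<^sup>2 \<le> k \<and> (cmod uS)\<^sup>2 \<le> k)" by (rule nn[OF d(1,3) na(2)])
  have n3: "\<not> ((cmod uN)\<^sup>2 \<le> k \<and> (cmod uW)\<^sup>2 \<le> k)" by (rule nn[OF d(1,4) na(3)])
  have n4: "\<not> ((cmod uE)\<^sup>2 \<le> k \<and> (cmod uS)\<^sup>2 \<le> k)" by (rule nn[OF d(2,3) na(4)])
  have n5: "\<not> ((cmod uE)\<^sup>2 \<le> k \<and> (cmod uW)\<^sup>2 \<le> k)" by (rule nn[OF d(2,4) na(5)])
  have n6: "\<not> ((cmod uS)\<^sup>2 \<le> k \<and> (cmod uW)\<^sup>2 \<le> k)" by (rule nn[OF d(3,4) na(6)])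
  have phisum: "phib T uN + phib T uE + phib T uS + phib T uW \<le> pi"
    using n1 n2 n3 n4 n5 n6 pi_gt_zero unfolding phib_def k_def[symmetric] by (auto split: if_splits)
  define tN where "tN = Arg uN"
  define tc1 where "tc1 = tN + Arg (c1 / uN)"
  define tE where "tE = tc1 + Arg (uE / c1)"
  define tc2 where "tc2 = tE + Arg (c2 / uE)"
  define tS where "tS = tc2 + Arg (uS / c2)"
  define tc3 where "tc3 = tS + Arg (c3 / uS)"
  define tW where "tW = tc3 + Arg (uW / c3)"
  define tc4 where "tc4 = tW + Arg (c4 / uW)"
  define tN2 where "tN2 = tc4 + Arg (uN / c4)"
  have rN: "uN = rcis (cmod uN) tN" by (simp add: tN_def rcis_cmod_Arg)
  have rc1: "c1 = rcis (cmod c1) tc1" unfolding tc1_def by (rule lift_step[OF nz(1,5) rN])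
  have rE: "uE = rcis (cmod uE) tE" unfolding tE_def by (rule lift_step[OF nz(5,2) rc1])
  have rc2: "c2 = rcis (cmod c2) tc2" unfolding tc2_def by (rule lift_step[OF nz(2,6) rE])
  have rS: "uS = rcis (cmod uS) tS" unfolding tS_def by (rule lift_step[OF nz(6,3) rc2])
  have rc3: "c3 = rcis (cmod c3) tc3" unfolding tc3_def by (rule lift_step[OF nz(3,7) rS])
  have rW: "uW = rcis (cmod uW) tW" unfolding tW_def by (rule lift_step[OF nz(7,4) rc3])
  have rc4: "c4 = rcis (cmod c4) tc4" unfolding tc4_def by (rule lift_step[OF nz(4,8) rW])
  have rN2: "uN = rcis (cmod uN) tN2" unfolding tN2_def by (rule lift_step[OF nz(8,1) rc4])
  have "cis tN2 = cis tN" using rcis_cancel[of "cmod uN" tN2 tN] rN rN2 nz(1) by simp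
  hence "cis (tN2 - tN) = 1" by (simp add: cis_divide[symmetric])
  hence "cos (tN2 - tN) = 1" by (simp add: complex_eq_iff)
  then obtain n :: int where n: "tN2 - tN = real_of_int n * 2 * pi" by (auto simp: cos_one_2pi_int)
  have "\<bar>tN2 - tN\<bar> < 2 * pi"
  proof -
    have "tN2 - tN = Arg (c1 / uN) + Arg (uE / c1) + Arg (c2 / uE) + Arg (uS / c2)
        + Arg (c3 / uS) + Arg (uW / c3) + Arg (c4 / uW) + Arg (uN / c4)"
      by (simp add: tN2_def tc4_def tW_def tc3_def tS_def tc2_def tE_def tc1_def)
    thus ?thesis using e1 e2 e3 e4 e5 e6 e7 e8 phisum by linarith
  qed
  hence "\<bar>real_of_int n\<bar> * (2 * pi) < 1 * (2 * pi)" using n by (simp add: abs_mult)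
  hence "\<bar>real_of_int n\<bar> < 1" by (simp only: mult_less_cancel_right) (use pi_gt_zero in simp)
  hence "n = 0" by linarith
  hence tN2: "tN2 = tN" using n by simp
  have p2: "pi/2 > 0" by simp
  have a1: "\<bar>tc1 - tN\<bar> < pi/2" using e1 phib_le[of T uN] by (simp add: tc1_def)
  have a2: "\<bar>tE - tc1\<bar> < pi/2" using e2 phib_le[of T uE] by (simp add: tE_def)
  have a3: "\<bar>tc2 - tE\<bar> < pi/2" using e3 phib_le[of T uE] by (simp add: tc2_def)
  have a4: "\<bar>tS - tc2\<bar> < pi/2" using e4 phib_le[of T uS] by (simp add: tS_def)
  have a5: "\<bar>tc3 - tS\<bar> < pi/2" using e5 phib_le[of T uS] by (simp add: tc3_def)
  have a6: "\<bar>tW - tc3\<bar> < pi/2" using e6 phib_le[of T uW] by (simp add: tW_def)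
  have a7: "\<bar>tc4 - tW\<bar> < pi/2" using e7 phib_le[of T uW] by (simp add: tc4_def)
  have "tN - tc4 = Arg (uN / c4)" using tN2 by (simp add: tN2_def)
  hence a8: "\<bar>tN - tc4\<bar> < pi/2" using e8 phib_le[of T uN] by simp
  have sym: "Dk c1 uN \<le> T" "Dk c1 uE \<le> T" "Dk c2 uE \<le> T" "Dk c2 uS \<le> T"
            "Dk c3 uS \<le> T" "Dk c3 uW \<le> T" "Dk c4 uW \<le> T" "Dk c4 uN \<le> T"
    using ed Dk_sym by metis+
  have nsym: "Dk uE uN > T" "Dk uS uN > T" "Dk uW uN > T" "Dk uS uE > T" "Dk uW uE > T" "Dk uW uS > T"
    using na Dk_sym by metis+
  note K = key[of _ _ _ _ T]
  consider "tN \<le> tE \<and> tN \<le> tS \<and> tN \<le> tW" | "tE \<le> tN \<and> tE \<le> tS \<and> tE \<le> tW"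
    | "tS \<le> tN \<and> tS \<le> tE \<and> tS \<le> tW" | "tW \<le> tN \<and> tW \<le> tE \<and> tW \<le> tS" by linarith
  then show False
  proof cases
    case 1
    show False
    proof (cases "tE \<le> tW")
      case True
      show False
        by (rule K[OF d(4,8,1,2) nz(4,8,1,2) sp(4,1,2) co(4) ed(7) sym(8) na(5) nsym(1) rW rc4 rN rE a7 a8])
           (use 1 True in linarith)+
    next
      case False
      show False
        by (rule K[OF d(1,5,2,4) nz(1,5,2,4) sp(1,2,4) co(1) ed(1) sym(2) nsym(3) nsym(5) rN rc1 rE rW a1 a2])
           (use 1 False in linarith)+
    qed
  next
    case 2
    show False
    proof (cases "tN \<le> tS")
      case True
      show False
        by (rule K[OF d(2,6,3,1) nz(2,6,3,1) sp(2,3,1) co(2) ed(3) sym(4) na(1) na(2) rE rc2 rS rN a3 a4])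
           (use 2 True in linarith)+
    next
      case False
      show False
        by (rule K[OF d(1,5,2,3) nz(1,5,2,3) sp(1,2,3) co(1) ed(1) sym(2) nsym(2) nsym(4) rN rc1 rE rS a1 a2])
           (use 2 False in linarith)+
    qed
  next
    case 3
    show False
    proof (cases "tE \<le> tW")
      case True
      show False
        by (rule K[OF d(3,7,4,2) nz(3,7,4,2) sp(3,4,2) co(3) ed(5) sym(6) na(4) na(5) rS rc3 rW rE a5 a6])
           (use 3 True in linarith)+
    next
      case False
      show False
        by (rule K[OF d(2,6,3,4) nz(2,6,3,4) sp(2,3,4) co(2) ed(3) sym(4) nsym(5) nsym(6) rE rc2 rS rW a3 a4])
           (use 3 False in linarith)+
    qed
  next
    case 4
    show False
    proof (cases "tS \<le> tN")
      case True
      show False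
        by (rule K[OF d(4,8,1,3) nz(4,8,1,3) sp(4,1,3) co(4) ed(7) sym(8) na(6) nsym(2) rW rc4 rN rS a7 a8])
           (use 4 True in linarith)+
    next
      case False
      show False
        by (rule K[OF d(3,7,4,1) nz(3,7,4,1) sp(3,4,1) co(3) ed(5) sym(6) na(2) na(3) rS rc3 rW rN a5 a6])
           (use 4 False in linarith)+
    qed
  qed
qed


lemma T_bound3:
  fixes k :: nat assumes "k \<ge> 5"
  shows "cosh (2 * ln (real (k^2))) \<ge> 312"
proof -
  define X where "X = real k ^ 4"
  have k5: "real k \<ge> 5" using assms by simp
  have k25: "real k * real k \<ge> 5 * 5" using k5 by (intro mult_mono) auto
  have X6: "X \<ge> 625"
  proof -
    have "X = (real k * real k) * (real k * real k)" by (simp add: X_def eval_nat_numeral)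
    also have "\<dots> \<ge> (5 * 5) * (5 * 5)" by (rule mult_mono[OF k25 k25]) simp_all
    finally show ?thesis by simp
  qed
  have a: "ln (real k ^ 2) = 2 * ln (real k)" using ln_realpow[of "real k" 2] k5 by simp
  have b: "ln (real k ^ 4) = 4 * ln (real k)" using ln_realpow[of "real k" 4] k5 by simp
  have "2 * ln (real (k^2)) = ln X"
    unfolding X_def of_nat_power a b by simp
  hence e: "cosh (2 * ln (real (k^2))) = X / 2 + inverse X / 2"
    using X6 by (simp add: cosh_ln_real add_divide_distrib)
  have i0: "inverse X / 2 \<ge> 0" using X6 by simp
  show ?thesis using e i0 X6 by linarith
qed

lemma part3:
  fixes k :: nat assumes k: "k \<ge> 5"
  shows "\<not> hudg (ln (real (k^2))) (grid_V k) grid_E"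
proof
  assume "hudg (ln (real (k^2))) (grid_V k) grid_E"
  hence "\<exists>p. inj_on p (grid_V k) \<and> p ` grid_V k \<subseteq> H2 \<and>
      (\<forall>u\<in>grid_V k. \<forall>v\<in>grid_V k. u \<noteq> v \<longrightarrow> (grid_E u v \<longleftrightarrow> hdist (p u) (p v) \<le> 2 * ln (real (k^2))))"
    unfolding hudg_def by (rule conjunct2)
  then obtain p where inj: "inj_on p (grid_V k)" and sub: "p ` grid_V k \<subseteq> H2"
    and adj: "\<forall>u\<in>grid_V k. \<forall>v\<in>grid_V k. u \<noteq> v \<longrightarrow> (grid_E u v \<longleftrightarrow> hdist (p u) (p v) \<le> 2 * ln (real (k^2)))"
    by (elim exE conjE)
  define T where "T = cosh (2 * ln (real (k^2)))"
  have T: "T \<ge> 312" using T_bound3[OF k] by (simp add: T_def)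
  have r0: "2 * ln (real (k^2)) \<ge> 0" using k by simp
  define v where "v = p (1,1)"
  define K where "K g = Km v (p g)" for g
  have inV: "(a, b) \<in> grid_V k" if "a \<le> 2" "b \<le> 2" for a b using that k by (auto simp: grid_V_def)
  have H: "p g \<in> H2" if "g \<in> grid_V k" for g using sub that by auto
  have vH: "v \<in> H2" using H inV by (simp add: v_def)
  have R: "grid_E g h \<longleftrightarrow> Dk (K g) (K h) \<le> T" if "g \<in> grid_V k" "h \<in> grid_V k" "g \<noteq> h" for g h
    using adj that hdist_Km[OF vH H[OF that(1)] H[OF that(2)] r0] by (simp add: K_def T_def)
  have dk: "cmod (K g) < 1" if "g \<in> grid_V k" for g using Km_props(1)[OF vH H[OF that]] by (simp add: K_def)
  have K0: "K (1,1) = 0" using Km_props(2)[OF vH vH] by (simp add: K_def v_def)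
  have Knz: "K g \<noteq> 0" if "g \<in> grid_V k" "g \<noteq> (1,1)" for g
  proof -
    have "p g \<noteq> v" using inj that inV[of 1 1] by (auto simp: v_def inj_on_def)
    thus ?thesis using Km_props(2)[OF vH H[OF that(1)]] by (simp add: K_def)
  qed
  have R0: "grid_E (1,1) h \<longleftrightarrow> Dk 0 (K h) \<le> T" if "h \<in> grid_V k" "h \<noteq> (1,1)" for h
    using R[OF inV[of 1 1] that(1)] that(2) K0 by auto
  have T1: "T \<ge> 312" by (rule T)
  have d0: "cmod (K (0,1)) < 1" using dk inV[of 0 1] by simp
  have d1: "cmod (K (1,2)) < 1" using dk inV[of 1 2] by simp
  have d2: "cmod (K (2,1)) < 1" using dk inV[of 2 1] by simp
  have d3: "cmod (K (1,0)) < 1" using dk inV[of 1 0] by simp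
  have d4: "cmod (K (0,2)) < 1" using dk inV[of 0 2] by simp
  have d5: "cmod (K (2,2)) < 1" using dk inV[of 2 2] by simp
  have d6: "cmod (K (2,0)) < 1" using dk inV[of 2 0] by simp
  have d7: "cmod (K (0,0)) < 1" using dk inV[of 0 0] by simp
  have z0: "K (0,1) \<noteq> 0" using Knz inV[of 0 1] by simp
  have z1: "K (1,2) \<noteq> 0" using Knz inV[of 1 2] by simp
  have z2: "K (2,1) \<noteq> 0" using Knz inV[of 2 1] by simp
  have z3: "K (1,0) \<noteq> 0" using Knz inV[of 1 0] by simp
  have z4: "K (0,2) \<noteq> 0" using Knz inV[of 0 2] by simp
  have z5: "K (2,2) \<noteq> 0" using Knz inV[of 2 2] by simp
  have z6: "K (2,0) \<noteq> 0" using Knz inV[of 2 0] by simp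
  have z7: "K (0,0) \<noteq> 0" using Knz inV[of 0 0] by simp
  have s0: "Dk 0 (K (0,1)) \<le> T" using R0[of "(0,1)"] inV[of 0 1] by (simp add: grid_E_def)
  have s1: "Dk 0 (K (1,2)) \<le> T" using R0[of "(1,2)"] inV[of 1 2] by (simp add: grid_E_def)
  have s2: "Dk 0 (K (2,1)) \<le> T" using R0[of "(2,1)"] inV[of 2 1] by (simp add: grid_E_def)
  have s3: "Dk 0 (K (1,0)) \<le> T" using R0[of "(1,0)"] inV[of 1 0] by (simp add: grid_E_def)
  have o0: "Dk 0 (K (0,2)) > T" using R0[of "(0,2)"] inV[of 0 2] by (auto simp: grid_E_def)
  have o1: "Dk 0 (K (2,2)) > T" using R0[of "(2,2)"] inV[of 2 2] by (auto simp: grid_E_def)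
  have o2: "Dk 0 (K (2,0)) > T" using R0[of "(2,0)"] inV[of 2 0] by (auto simp: grid_E_def)
  have o3: "Dk 0 (K (0,0)) > T" using R0[of "(0,0)"] inV[of 0 0] by (auto simp: grid_E_def)
  have e0: "Dk (K (0,1)) (K (0,2)) \<le> T" using R[of "(0,1)" "(0,2)"] inV[of 0 1] inV[of 0 2] by (simp add: grid_E_def)
  have e1: "Dk (K (1,2)) (K (0,2)) \<le> T" using R[of "(1,2)" "(0,2)"] inV[of 1 2] inV[of 0 2] by (simp add: grid_E_def)
  have e2: "Dk (K (1,2)) (K (2,2)) \<le> T" using R[of "(1,2)" "(2,2)"] inV[of 1 2] inV[of 2 2] by (simp add: grid_E_def)
  have e3: "Dk (K (2,1)) (K (2,2)) \<le> T" using R[of "(2,1)" "(2,2)"] inV[of 2 1] inV[of 2 2] by (simp add: grid_E_def)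
  have e4: "Dk (K (2,1)) (K (2,0)) \<le> T" using R[of "(2,1)" "(2,0)"] inV[of 2 1] inV[of 2 0] by (simp add: grid_E_def)
  have e5: "Dk (K (1,0)) (K (2,0)) \<le> T" using R[of "(1,0)" "(2,0)"] inV[of 1 0] inV[of 2 0] by (simp add: grid_E_def)
  have e6: "Dk (K (1,0)) (K (0,0)) \<le> T" using R[of "(1,0)" "(0,0)"] inV[of 1 0] inV[of 0 0] by (simp add: grid_E_def)
  have e7: "Dk (K (0,1)) (K (0,0)) \<le> T" using R[of "(0,1)" "(0,0)"] inV[of 0 1] inV[of 0 0] by (simp add: grid_E_def)
  have n0: "Dk (K (0,1)) (K (1,2)) > T" using R[of "(0,1)" "(1,2)"] inV[of 0 1] inV[of 1 2] by (auto simp: grid_E_def)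
  have n1: "Dk (K (0,1)) (K (2,1)) > T" using R[of "(0,1)" "(2,1)"] inV[of 0 1] inV[of 2 1] by (auto simp: grid_E_def)
  have n2: "Dk (K (0,1)) (K (1,0)) > T" using R[of "(0,1)" "(1,0)"] inV[of 0 1] inV[of 1 0] by (auto simp: grid_E_def)
  have n3: "Dk (K (1,2)) (K (2,1)) > T" using R[of "(1,2)" "(2,1)"] inV[of 1 2] inV[of 2 1] by (auto simp: grid_E_def)
  have n4: "Dk (K (1,2)) (K (1,0)) > T" using R[of "(1,2)" "(1,0)"] inV[of 1 2] inV[of 1 0] by (auto simp: grid_E_def)
  have n5: "Dk (K (2,1)) (K (1,0)) > T" using R[of "(2,1)" "(1,0)"] inV[of 2 1] inV[of 1 0] by (auto simp: grid_E_def)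
  show False by (rule octagon[OF T1 d0 d1 d2 d3 d4 d5 d6 d7 z0 z1 z2 z3 z4 z5 z6 z7 s0 s1 s2 s3 o0 o1 o2 o3 e0 e1 e2 e3 e4 e5 e6 e7 n0 n1 n2 n3 n4 n5])
qed


lemma cos_ge_quad: "cos (x::real) \<ge> 1 - x\<^sup>2 / 2"
proof -
  have "cos x = 1 - 2 * (sin (x/2))\<^sup>2" using cos_double_sin[of "x/2"] by simp
  moreover have "(sin (x/2))\<^sup>2 \<le> (x/2)\<^sup>2"
    using abs_sin_x_le_abs_x[of "x/2"] by (metis abs_ge_zero power_mono power2_abs)
  ultimately show ?thesis by (simp add: power_divide)
qed

lemma cos27: assumes "pi \<le> 16/5" shows "cos (2 * pi / 7) \<ge> 11/20"
proof -
  have "(2 * pi / 7)\<^sup>2 \<le> (32/35)\<^sup>2" using assms by (intro power_mono) auto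
  hence h: "(2 * pi / 7)\<^sup>2 / 2 \<le> 512/1225" by (simp add: power2_eq_square)
  show ?thesis using cos_ge_quad[of "2 * pi / 7"] h by linarith
qed

lemma pigeon7:
  fixes f :: "nat \<Rightarrow> real"
  assumes "\<forall>j\<in>{1..7}. - pi < f j \<and> f j \<le> pi"
  shows "\<exists>i\<in>{1..7}. \<exists>j\<in>{1..7}. i \<noteq> j \<and> cos (f i - f j) \<ge> cos (2 * pi / 7)"
proof (rule ccontr)
  assume "\<not> ?thesis"
  hence nc: "cos (f i - f j) < cos (2 * pi / 7)" if "i \<in> {1..7}" "j \<in> {1..7}" "i \<noteq> j" for i j
    using that by force
  define \<delta> where "\<delta> = 2 * pi / 7"
  have \<delta>: "0 < \<delta>" "\<delta> \<le> pi" by (simp_all add: \<delta>_def)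
  have gt: "\<bar>f i - f j\<bar> > \<delta>" if "i \<in> {1..7}" "j \<in> {1..7}" "i \<noteq> j" for i j
  proof (rule ccontr)
    assume "\<not> ?thesis"
    hence "cos \<delta> \<le> cos \<bar>f i - f j\<bar>" using \<delta> by (intro cos_monotone_0_pi_le) auto
    thus False using nc[OF that] by (simp add: \<delta>_def cos_abs_real)
  qed
  have lt: "\<bar>f i - f j\<bar> < 2 * pi - \<delta>" if "i \<in> {1..7}" "j \<in> {1..7}" "i \<noteq> j" for i j
  proof (rule ccontr)
    assume "\<not> ?thesis"
    hence ge: "2 * pi - \<bar>f i - f j\<bar> \<le> \<delta>" by simp
    have "- pi < f i" "f i \<le> pi" "- pi < f j" "f j \<le> pi" using assms that by auto
    hence "\<bar>f i - f j\<bar> < 2 * pi" by (simp add: abs_less_iff)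
    hence "cos \<delta> \<le> cos (2 * pi - \<bar>f i - f j\<bar>)" using ge \<delta> by (intro cos_monotone_0_pi_le) auto
    also have "cos (2 * pi - \<bar>f i - f j\<bar>) = cos (f i - f j)"
      by (simp add: cos_diff cos_abs_real)
    finally show False using nc[OF that] by (simp add: \<delta>_def)
  qed
  define m where "m = Min (f ` {1..7})"
  have mle: "m \<le> f i" if "i \<in> {1..7}" for i using that by (simp add: m_def)
  obtain i0 where i0: "i0 \<in> {1..7}" "f i0 = m"
  proof -
    have "m \<in> f ` {1..7}" unfolding m_def by (rule Min_in) auto
    thus ?thesis using that by auto
  qed
  have gb: "0 \<le> f i - m \<and> f i - m < 6 * \<delta>" if "i \<in> {1..7}" for i
  proof (cases "i = i0")
    case True thus ?thesis using i0 \<delta> by simp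
  next
    case False
    have "f i - m = \<bar>f i - f i0\<bar>" using mle[OF that] i0 by simp
    also have "\<dots> < 2 * pi - \<delta>" by (rule lt[OF that i0(1) False])
    also have "2 * pi - \<delta> = 6 * \<delta>" by (simp add: \<delta>_def)
    finally show ?thesis using mle[OF that] by simp
  qed
  define b where "b i = nat \<lfloor>(f i - m) / \<delta>\<rfloor>" for i
  have bl: "b i < 6" if "i \<in> {1..7}" for i
  proof -
    have "(f i - m) / \<delta> < 6" using gb[OF that] \<delta> by (simp add: divide_less_eq)
    hence fl6: "\<lfloor>(f i - m) / \<delta>\<rfloor> < 6" by linarith
    show ?thesis unfolding b_def using fl6 by linarith
  qed
  have "\<not> inj_on b {1..7}"
  proof
    assume "inj_on b {1..7}"
    hence "card (b ` {1..7}) = card {1..(7::nat)}" by (rule card_image)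
    moreover have "card (b ` {1..7}) \<le> card {..<(6::nat)}"
      using bl by (intro card_mono) auto
    ultimately show False by simp
  qed
  then obtain i j where ij: "i \<in> {1..7}" "j \<in> {1..7}" "i \<noteq> j" "b i = b j"
    unfolding inj_on_def by blast
  have fl: "\<lfloor>(f i - m) / \<delta>\<rfloor> = \<lfloor>(f j - m) / \<delta>\<rfloor>"
  proof -
    have "0 \<le> (f i - m) / \<delta>" "0 \<le> (f j - m) / \<delta>" using gb ij \<delta> by auto
    hence z: "0 \<le> \<lfloor>(f i - m) / \<delta>\<rfloor>" "0 \<le> \<lfloor>(f j - m) / \<delta>\<rfloor>" by auto
    show ?thesis using ij(4) z unfolding b_def by (metis eq_nat_nat_iff)
  qed
  have "\<bar>(f i - m) / \<delta> - (f j - m) / \<delta>\<bar> < 1"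
    using fl floor_correct[of "(f i - m) / \<delta>"] floor_correct[of "(f j - m) / \<delta>"] by linarith
  hence "\<bar>f i - f j\<bar> / \<delta> < 1" using \<delta> by (simp add: diff_divide_distrib[symmetric])
  hence "\<bar>f i - f j\<bar> < \<delta>" using \<delta> by (simp add: divide_less_eq)
  thus False using gt[OF ij(1-3)] by simp
qed



lemma Re_cnj_Arg: "Re (p * cnj q) = cmod p * cmod q * cos (Arg p - Arg q)"
proof (cases "p = 0 \<or> q = 0")
  case True thus ?thesis by auto
next
  case False
  hence nz: "p \<noteq> 0" "q \<noteq> 0" by auto
  have "Re p = cmod p * cos (Arg p)" "Im p = cmod p * sin (Arg p)"
       "Re q = cmod q * cos (Arg q)" "Im q = cmod q * sin (Arg q)"
    using cos_Arg[OF nz(1)] sin_Arg[OF nz(1)] cos_Arg[OF nz(2)] sin_Arg[OF nz(2)] nz by auto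
  thus ?thesis by (simp add: cos_diff algebra_simps)
qed

lemma sqrt_lower: assumes "0 \<le> a2" "a2 \<le> 1/4" shows "1 - 11/20 * a2 \<le> sqrt (1 - a2)"
proof (rule real_le_rsqrt)
  have "(1 - 11/20 * a2)\<^sup>2 = 1 - a2 - a2 * (1/10 - 121/400 * a2)" by (simp add: power2_eq_square algebra_simps)
  moreover have "a2 * (1/10 - 121/400 * a2) \<ge> 0" using assms by simp
  ultimately show "(1 - 11/20 * a2)\<^sup>2 \<le> 1 - a2" by linarith
qed

lemma close_pair0:
  assumes "cmod p < 1" "cmod q < 1" "cmod p \<le> cmod q" "(cmod p)\<^sup>2 \<le> 1/4"
    "Re (p * cnj q) \<ge> 11/20 * cmod p * cmod q"
  shows "Dk p q \<le> Dk 0 q"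
proof -
  have s: "sq1 p > 0" "sq1 q > 0" using sq1_pos assms by auto
  have "Nk p q \<le> 1 - 11/20 * cmod p * cmod q" using assms(5) by (simp add: Nk_def)
  also have "\<dots> \<le> 1 - 11/20 * (cmod p)\<^sup>2"
    using assms(3) by (simp add: power2_eq_square mult_left_mono)
  also have "\<dots> \<le> sq1 p" unfolding sq1_def by (rule sqrt_lower) (use assms(4) in simp_all)
  finally have N: "Nk p q \<le> sq1 p" .
  have "Dk p q = Nk p q / (sq1 p * sq1 q)" by (simp add: Dk_Nk)
  also have "\<dots> \<le> sq1 p / (sq1 p * sq1 q)" using N s by (intro divide_right_mono) auto
  also have "\<dots> = Dk 0 q" using s by (simp add: Dk_0)
  finally show ?thesis .
qed

lemma close_pair:
  assumes "cmod p < 1" "cmod q < 1" "(cmod p)\<^sup>2 \<le> 1/4" "(cmod q)\<^sup>2 \<le> 1/4"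
    "Re (p * cnj q) \<ge> 11/20 * cmod p * cmod q"
  shows "Dk p q \<le> max (Dk 0 p) (Dk 0 q)"
proof (cases "cmod p \<le> cmod q")
  case True thus ?thesis using close_pair0[OF assms(1,2) True assms(3,5)] by simp
next
  case False
  have "Re (q * cnj p) = Re (p * cnj q)" by (simp add: algebra_simps)
  hence "Re (q * cnj p) \<ge> 11/20 * cmod q * cmod p" using assms(5) by (simp add: mult_ac)
  hence "Dk q p \<le> Dk 0 p" using close_pair0[OF assms(2,1) _ assms(4)] False by simp
  thus ?thesis using Dk_sym[of p q] by simp
qed

lemma part2_gen:
  fixes n :: nat assumes n: "n \<ge> 8" and piub: "pi \<le> 16/5"
  shows "\<not> hudg (1 / (real n)^3) (star_V n) star_E"
proof
  assume "hudg (1 / (real n)^3) (star_V n) star_E"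
  hence "\<exists>p. inj_on p (star_V n) \<and> p ` star_V n \<subseteq> H2 \<and>
      (\<forall>u\<in>star_V n. \<forall>v\<in>star_V n. u \<noteq> v \<longrightarrow> (star_E u v \<longleftrightarrow> hdist (p u) (p v) \<le> 2 * (1 / (real n)^3)))"
    unfolding hudg_def by (rule conjunct2)
  then obtain p where inj: "inj_on p (star_V n)" and sub: "p ` star_V n \<subseteq> H2"
    and adj: "\<forall>u\<in>star_V n. \<forall>v\<in>star_V n. u \<noteq> v \<longrightarrow> (star_E u v \<longleftrightarrow> hdist (p u) (p v) \<le> 2 * (1 / (real n)^3))"
    by (elim exE conjE)
  define r where "r = 2 * (1 / (real n)^3)"
  define T where "T = cosh r"
  have n3: "(real n)^3 \<ge> 8^3" using n by (intro power_mono) auto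
  have r0: "0 \<le> r" and r1: "r \<le> 1/256" using n3 by (auto simp: r_def divide_le_eq)
  have T1: "T \<ge> 1" by (simp add: T_def cosh_real_ge_1)
  have Tu: "T \<le> 1 + 1/65536"
  proof -
    have "T \<le> 1 + r\<^sup>2" using cosh_le_1_plus_sq[of r] r0 r1 by (simp add: T_def)
    also have "r\<^sup>2 \<le> (1/256)\<^sup>2" using r0 r1 by (intro power_mono) auto
    finally show ?thesis by (simp add: power2_eq_square)
  qed
  define v where "v = p 0"
  define K where "K j = Km v (p j)" for j
  have inV: "j \<in> star_V n" if "j \<le> 7" for j using that n by (simp add: star_V_def)
  have H: "p j \<in> H2" if "j \<in> star_V n" for j using sub that by auto
  have vH: "v \<in> H2" using H inV[of 0] by (simp add: v_def)
  have R: "star_E i j \<longleftrightarrow> Dk (K i) (K j) \<le> T" if "i \<in> star_V n" "j \<in> star_V n" "i \<noteq> j" for i j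
    using adj that hdist_Km[OF vH H[OF that(1)] H[OF that(2)] r0] by (simp add: K_def T_def r_def)
  have K0: "K 0 = 0" using Km_props(2)[OF vH vH] by (simp add: K_def v_def)
  have dk: "cmod (K j) < 1" if "j \<in> star_V n" for j using Km_props(1)[OF vH H[OF that]] by (simp add: K_def)
  have leaf: "Dk 0 (K j) \<le> T" if "j \<in> {1..7}" for j
    using R[of 0 j] inV[of 0] inV[of j] that K0 by (auto simp: star_E_def)
  have small: "(cmod (K j))\<^sup>2 \<le> 1/4" if "j \<in> {1..7}" for j
  proof -
    have j: "j \<in> star_V n" using inV that by auto
    have s: "sq1 (K j) > 0" using sq1_pos[OF dk[OF j]] .
    have "1 / sq1 (K j) \<le> T" using leaf[OF that] by (simp add: Dk_0)
    hence "1 \<le> T * sq1 (K j)" using s by (simp add: divide_le_eq)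
    hence "1 \<le> (T * sq1 (K j))\<^sup>2" by (simp add: one_le_power)
    also have "\<dots> = T\<^sup>2 * (1 - (cmod (K j))\<^sup>2)" using sq1_sq[OF dk[OF j]] by (simp add: power_mult_distrib)
    also have "\<dots> \<le> (4/3) * (1 - (cmod (K j))\<^sup>2)"
    proof (rule mult_right_mono)
      have "T\<^sup>2 \<le> (1 + 1/65536)\<^sup>2" using Tu T1 by (intro power_mono) auto
      thus "T\<^sup>2 \<le> 4/3" by (simp add: power2_eq_square)
      show "0 \<le> 1 - (cmod (K j))\<^sup>2" using dk[OF j] by (simp add: abs_square_le_1 less_imp_le)
    qed
    finally show ?thesis by simp
  qed
  have "\<forall>j\<in>{1..7}. - pi < Arg (K j) \<and> Arg (K j) \<le> pi" using Arg_bounded by blast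
  from pigeon7[OF this] obtain i j where ij: "i \<in> {1..7}" "j \<in> {1..7}" "i \<noteq> j"
    and c: "cos (Arg (K i) - Arg (K j)) \<ge> cos (2 * pi / 7)" by blast
  have c2: "cos (Arg (K i) - Arg (K j)) \<ge> 11/20" using c cos27[OF piub] by linarith
  have iV: "i \<in> star_V n" "j \<in> star_V n" using ij inV by auto
  have "Re (K i * cnj (K j)) \<ge> 11/20 * cmod (K i) * cmod (K j)"
  proof -
    have "11/20 * (cmod (K i) * cmod (K j)) \<le> cos (Arg (K i) - Arg (K j)) * (cmod (K i) * cmod (K j))"
      using c2 by (intro mult_right_mono) auto
    thus ?thesis unfolding Re_cnj_Arg by (simp add: mult_ac)
  qed
  hence "Dk (K i) (K j) \<le> max (Dk 0 (K i)) (Dk 0 (K j))"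
    by (intro close_pair dk iV small ij)
  also have "\<dots> \<le> T" using leaf ij by simp
  finally have "Dk (K i) (K j) \<le> T" .
  moreover have "\<not> star_E i j" using ij by (simp add: star_E_def)
  ultimately show False using R[OF iV ij(3)] by simp
qed


lemma pi_le_16_5: "pi \<le> 16/5"
  using pi_approx by simp

theorem theorem7:
  shows "(\<forall>k::nat. k \<ge> 1 \<longrightarrow> hudg (1 / (real (k^2))^3) (grid_V k) grid_E)
       \<and> (\<forall>n::nat. n \<ge> 8 \<longrightarrow> \<not> hudg (1 / (real n)^3) (star_V n) star_E)
       \<and> (\<forall>k::nat. k \<ge> 5 \<longrightarrow> \<not> hudg (ln (real (k^2))) (grid_V k) grid_E)
       \<and> (\<forall>n::nat. n \<ge> 1 \<longrightarrow> hudg (ln (real n)) (star_V n) star_E)"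
  using part1 part2_gen[OF _ pi_le_16_5] part3 part4 by blast

end
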